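(* Let $\mathbf K_t^\pm$, $a_t^\pm$, $b_t^\pm$ ($t=0,\dots,T$) be defined by the backward recursion: $a_T^\pm=b_T^\pm=0$; for $t<T$, $\mathbf K_t^\pm\in\arg\min_{\mathbb R^n}F_t^\pm$ and $a_t^+=\rho_{t+1}\mathbb E[\mathbf P_t]'\mathbf K_t^++\mathbb E[a_{t+1}^+Z_t^+1_{\{Z_t^+\ge0\}}]+\mathbb E[a_{t+1}^-Z_t^+1_{\{Z_t^+<0\}}]$, $a_t^-=\rho_{t+1}\mathbb E[\mathbf P_t]'\mathbf K_t^-+\mathbb E[a_{t+1}^+Z_t^-1_{\{Z_t^-\le0\}}]+\mathbb E[a_{t+1}^-Z_t^-1_{\{Z_t^->0\}}]$, $b_t^+=\rho_{t+1}^2(\mathbf K_t^+)'\mathbb E[\mathbf P_t\mathbf P_t']\mathbf K_t^++2\rho_{t+1}\mathbb E[a_{t+1}^+Z_t^+\mathbf P_t'\mathbf K_t^+1_{\{Z_t^+\ge0\}}]+2\rho_{t+1}\mathbb E[a_{t+1}^-Z_t^+\mathbf P_t'\mathbf K_t^+1_{\{Z_t^+<0\}}]+\mathbb E[b_{t+1}^+(Z_t^+)^21_{\{Z_t^+\ge0\}}]+\mathbb E[b_{t+1}^-(Z_t^+)^21_{\{Z_t^+<0\}}]$, $b_t^-=\rho_{t+1}^2(\mathbf K_t^-)'\mathbb E[\mathbf P_t\mathbf P_t']\mathbf K_t^-+2\rho_{t+1}\mathbb E[a_{t+1}^+Z_t^-\mathbf P_t'\mathbf K_t^-1_{\{Z_t^-\le0\}}]+2\rho_{t+1}\mathbb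 E[a_{t+1}^-Z_t^-\mathbf P_t'\mathbf K_t^-1_{\{Z_t^->0\}}]+\mathbb E[b_{t+1}^+(Z_t^-)^21_{\{Z_t^-\le0\}}]+\mathbb E[b_{t+1}^-(Z_t^-)^21_{\{Z_t^->0\}}]$, with $Z_t^\pm=s_t+\mathbf P_t'\mathbf K_t^\pm$. Let $Y_t=X_t-\rho_t^{-1}W$ and let the policy be $\mathbf u_j=\mathbf K_j^+Y_j1_{\{Y_j\ge0\}}+\mathbf K_j^-Y_j1_{\{Y_j<0\}}$ for $j=t,\dots,T-1$. Then for every $t\in\{0,\dots,T\}$, $$\mathbb E[Y_T\mid Y_t]=\rho_tY_t+a_t^+Y_t1_{\{Y_t\ge0\}}+a_t^-Y_t1_{\{Y_t<0\}},$$ $$\mathbb E[Y_T^2\mid Y_t]=\rho_t^2Y_t^2+(2\rho_ta_t^++b_t^+)Y_t^21_{\{Y_t\ge0\}}+(2\rho_ta_t^-+b_t^-)Y_t^21_{\{Y_t<0\}},$$ and consequently $\mathrm{Var}(X_T\mid X_t)=\big[(b_t^+-(a_t^+)^2)1_{\{Y_t\ge0\}}+(b_t^--(a_t^-)^2)1_{\{Y_t<0\}}\big]Y_t^2$.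
   Context: Market: $T$ periods, one risk-free asset with deterministic gross return $s_t>1$ in period $t$, and $n$ risky assets with random gross return vector $\mathbf e_t$ in period $t$. The excess return vector is $\mathbf P_t=\mathbf e_t-s_t\mathbf 1\in\mathbb R^n$. The vectors $\mathbf P_0,\dots,\mathbf P_{T-1}$ are statistically independent, absolutely continuous, with finite first and second moments, and each covariance matrix $\mathrm{Cov}(\mathbf P_t)=\mathbb E[\mathbf P_t\mathbf P_t']-\mathbb E[\mathbf P_t]\mathbb E[\mathbf P_t]'$ is positive definite. The market is arbitrage-free; in particular, for every nonzero $\mathbf L\in\mathbb R^n$, neither $\mathbf P_t'\mathbf L\le 0$ a.s. nor $\mathbf P_t'\mathbf L\ge 0$ a.s. holds. Write $\rho_t=\prod_{j=t}^{T-1}s_j$ for $t<T$ and $\rho_T=1$. Wealth dynamics: $X_{t+1}=s_tX_t+\mathbf P_t'\mathbf u_t$, with $W\in\mathbb R$ a fixed investment target; then $Y_{t+1}=s_tY_t+\mathbf P_t'\mathbf u_t$. Definition of $F_t^\pm:\mathbb R^n\to\mathbb R$, given deterministic numbers $a_{t+1}^\pm,b_{t+1}^\pm$ and constants $\gamma_t^\pm\ge0$, writing $Z=s_t+\mathbf P_t'\mathbf K$: $$F_t^+(\mathbf K)=\rho_{t+1}^2\mathbf K'\mathrm{Cov}(\mathbf P_t)\mathbf K+\mathbb E\big[(2\rho_{t+1}a_{t+1}^++b_{t+1}^+)Z^21_{\{Z\ge0\}}\big]+\mathbb E\big[(2\rho_{t+1}a_{t+1}^-+b_{t+1}^-)Z^21_{\{Z<0\}}\big]-M_+^2-2\rho_{t+1}M_+\,(s_t+\mathbb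 E[\mathbf P_t]'\mathbf K)-\gamma_t^+M_+-\rho_{t+1}\gamma_t^+(s_t+\mathbb E[\mathbf P_t]'\mathbf K),$$ where $M_+=\mathbb E[a_{t+1}^+Z1_{\{Z\ge0\}}]+\mathbb E[a_{t+1}^-Z1_{\{Z<0\}}]$; and $$F_t^-(\mathbf K)=\rho_{t+1}^2\mathbf K'\mathrm{Cov}(\mathbf P_t)\mathbf K+\mathbb E\big[(2\rho_{t+1}a_{t+1}^++b_{t+1}^+)Z^21_{\{Z\le0\}}\big]+\mathbb E\big[(2\rho_{t+1}a_{t+1}^-+b_{t+1}^-)Z^21_{\{Z>0\}}\big]-M_-^2-2\rho_{t+1}M_-\,(s_t+\mathbb E[\mathbf P_t]'\mathbf K)+\gamma_t^-M_-+\rho_{t+1}\gamma_t^-(s_t+\mathbb E[\mathbf P_t]'\mathbf K),$$ where $M_-=\mathbb E[a_{t+1}^+Z1_{\{Z\le0\}}]+\mathbb E[a_{t+1}^-Z1_{\{Z>0\}}]$. *)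

theory Defs
  imports "HOL-Probability.Probability"
begin

definition mean_vec :: "'a measure \<Rightarrow> ('a \<Rightarrow> real^'n) \<Rightarrow> real^'n" where
  "mean_vec M P = (\<chi> i. integral\<^sup>L M (\<lambda>\<omega>. P \<omega> $ i))"

definition smom_mat :: "'a measure \<Rightarrow> ('a \<Rightarrow> real^'n) \<Rightarrow> real^'n^'n" where
  "smom_mat M P = (\<chi> i j. integral\<^sup>L M (\<lambda>\<omega>. P \<omega> $ i * P \<omega> $ j))"

definition cov_mat :: "'a measure \<Rightarrow> ('a \<Rightarrow> real^'n) \<Rightarrow> real^'n^'n" where
  "cov_mat M P = (\<chi> i j. integral\<^sup>L M (\<lambda>\<omega>. P \<omega> $ i * P \<omega> $ j)
                       - integral\<^sup>L M (\<lambda>\<omega>. P \<omega> $ i) * integral\<^sup>L M (\<lambda>\<omega>. P \<omega> $ j))"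

text \<open>Arguments: probability space M, excess return Pt = P_t,
  st = s_t, r = rho_{t+1}, ap1 = a_{t+1}^+, am1 = a_{t+1}^-, bp1 = b_{t+1}^+, bm1 = b_{t+1}^-,
  g = gamma_t^{+/-}, K the argument.\<close>

definition F_plus :: "'a measure \<Rightarrow> ('a \<Rightarrow> real^'n) \<Rightarrow> real \<Rightarrow> real \<Rightarrow> real \<Rightarrow> real
    \<Rightarrow> real \<Rightarrow> real \<Rightarrow> real \<Rightarrow> real^'n \<Rightarrow> real" where
  "F_plus M Pt st r ap1 am1 bp1 bm1 g K =
    (let Z = (\<lambda>\<omega>. st + Pt \<omega> \<bullet> K);
         Mp = integral\<^sup>L M (\<lambda>\<omega>. ap1 * Z \<omega> * (if Z \<omega> \<ge> 0 then 1 else 0))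
            + integral\<^sup>L M (\<lambda>\<omega>. am1 * Z \<omega> * (if Z \<omega> < 0 then 1 else 0));
         m = st + mean_vec M Pt \<bullet> K
     in r\<^sup>2 * (K \<bullet> (cov_mat M Pt *v K))
        + integral\<^sup>L M (\<lambda>\<omega>. (2 * r * ap1 + bp1) * (Z \<omega>)\<^sup>2 * (if Z \<omega> \<ge> 0 then 1 else 0))
        + integral\<^sup>L M (\<lambda>\<omega>. (2 * r * am1 + bm1) * (Z \<omega>)\<^sup>2 * (if Z \<omega> < 0 then 1 else 0))
        - Mp\<^sup>2 - 2 * r * Mp * m - g * Mp - r * g * m)"

definition F_minus :: "'a measure \<Rightarrow> ('a \<Rightarrow> real^'n) \<Rightarrow> real \<Rightarrow> real \<Rightarrow> real \<Rightarrow> real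
    \<Rightarrow> real \<Rightarrow> real \<Rightarrow> real \<Rightarrow> real^'n \<Rightarrow> real" where
  "F_minus M Pt st r ap1 am1 bp1 bm1 g K =
    (let Z = (\<lambda>\<omega>. st + Pt \<omega> \<bullet> K);
         Mm = integral\<^sup>L M (\<lambda>\<omega>. ap1 * Z \<omega> * (if Z \<omega> \<le> 0 then 1 else 0))
            + integral\<^sup>L M (\<lambda>\<omega>. am1 * Z \<omega> * (if Z \<omega> > 0 then 1 else 0));
         m = st + mean_vec M Pt \<bullet> K
     in r\<^sup>2 * (K \<bullet> (cov_mat M Pt *v K))
        + integral\<^sup>L M (\<lambda>\<omega>. (2 * r * ap1 + bp1) * (Z \<omega>)\<^sup>2 * (if Z \<omega> \<le> 0 then 1 else 0))
        + integral\<^sup>L M (\<lambda>\<omega>. (2 * r * am1 + bm1) * (Z \<omega>)\<^sup>2 * (if Z \<omega> > 0 then 1 else 0))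
        - Mm\<^sup>2 - 2 * r * Mm * m + g * Mm + r * g * m)"

definition cond_var :: "'a measure \<Rightarrow> 'a measure \<Rightarrow> ('a \<Rightarrow> real) \<Rightarrow> 'a \<Rightarrow> real" where
  "cond_var M F f = (\<lambda>\<omega>. real_cond_exp M F (\<lambda>x. (f x)\<^sup>2) \<omega> - (real_cond_exp M F f \<omega>)\<^sup>2)"

end

theory Submission imports Defs begin

lemma inner_le_norm_sq: "(x \<bullet> (y::real^'n))\<^sup>2 \<le> (norm x)\<^sup>2 * (norm y)\<^sup>2"
  proof -
  have "\<bar>x \<bullet> y\<bar> \<le> norm x * norm y" by (rule Cauchy_Schwarz_ineq2)
  then have "\<bar>x \<bullet> y\<bar>\<^sup>2 \<le> (norm x * norm y)\<^sup>2"
    by (intro power_mono) auto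
  then show ?thesis by (simp add: power_mult_distrib)
qed

primrec Xg :: "(nat \<Rightarrow> real) \<Rightarrow> real \<Rightarrow> (nat \<Rightarrow> (nat \<Rightarrow> real^'n) \<Rightarrow> real^'n) \<Rightarrow> nat \<Rightarrow> (nat \<Rightarrow> real^'n) \<Rightarrow> real" where
  "Xg s x0 g 0 b = x0"
| "Xg s x0 g (Suc j) b = s j * Xg s x0 g j b + b j \<bullet> g j (restrict b {..<j})"

lemma Xg_cong: "(\<And>i. i < j \<Longrightarrow> b i = b' i) \<Longrightarrow> Xg s x0 g j b = Xg s x0 g j b'"
proof (induction j)
  case (Suc j)
  have "restrict b {..<j} = restrict b' {..<j}" using Suc.prems by (auto simp: restrict_def)
  then show ?case using Suc by simp
qed simp

lemma int_ind_gen: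
  fixes f e :: "'b \<Rightarrow> real"
  assumes "integrable N f" "e \<in> borel_measurable N" "\<And>\<omega>. \<bar>e \<omega>\<bar> \<le> 1"
  shows "integrable N (\<lambda>\<omega>. e \<omega> * f \<omega>)"
  using assms(1)
proof (rule Bochner_Integration.integrable_bound)
  show "(\<lambda>\<omega>. e \<omega> * f \<omega>) \<in> borel_measurable N"
    using borel_measurable_integrable[OF assms(1)] assms(2) by measurable
  show "AE x in N. norm (e x * f x) \<le> norm (f x)"
    using assms(3) by (intro AE_I2) (simp add: abs_mult mult_left_le_one_le)
qed

lemma vimage_shift:
  fixes f :: "'a \<Rightarrow> real"
  shows "vimage_algebra X (\<lambda>x. f x + c) borel = vimage_algebra X f borel"
proof -
  have "{(\<lambda>x. f x + c) -` A \<inter> X |A. A \<in> sets borel} = {f -` A \<inter> X |A. A \<in> sets borel}"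
  proof (intro set_eqI iffI)
    fix S assume "S \<in> {(\<lambda>x. f x + c) -` A \<inter> X |A. A \<in> sets borel}"
    then obtain A where A: "A \<in> sets borel" "S = (\<lambda>x. f x + c) -` A \<inter> X" by blast
    have "(\<lambda>y::real. y + c) -` A \<inter> space borel \<in> sets borel"
      by (rule measurable_sets[OF _ A(1)]) simp
    moreover have "S = f -` ((\<lambda>y. y + c) -` A) \<inter> X" using A(2) by auto
    ultimately show "S \<in> {f -` A \<inter> X |A. A \<in> sets borel}" by auto
  next
    fix S assume "S \<in> {f -` A \<inter> X |A. A \<in> sets borel}"
    then obtain A where A: "A \<in> sets borel" "S = f -` A \<inter> X" by blast
    have "(\<lambda>y::real. y - c) -` A \<inter> space borel \<in> sets borel"
      by (rule measurable_sets[OF _ A(1)]) simp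
    moreover have "S = (\<lambda>x. f x + c) -` ((\<lambda>y. y - c) -` A) \<inter> X" using A(2) by auto
    ultimately show "S \<in> {(\<lambda>x. f x + c) -` A \<inter> X |A. A \<in> sets borel}" by auto
  qed
  then show ?thesis unfolding vimage_algebra_def by simp
qed

locale mv =
  fixes M :: "'a measure" and T :: nat and s :: "nat \<Rightarrow> real"
    and P :: "nat \<Rightarrow> 'a \<Rightarrow> real^'n"
  assumes M: "prob_space M"
    and s_gt1: "\<And>j. j < T \<Longrightarrow> s j > 1"
    and P_meas: "\<And>j. j < T \<Longrightarrow> P j \<in> borel_measurable M"
    and P_int2: "\<And>j. j < T \<Longrightarrow> integrable M (\<lambda>\<omega>. (norm (P j \<omega>))\<^sup>2)"
begin

interpretation prob_space M by (rule M)

lemma int_inner_sq: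
  assumes "j < T" shows "integrable M (\<lambda>\<omega>. (P j \<omega> \<bullet> K)\<^sup>2)"
proof -
  have "integrable M (\<lambda>\<omega>. (norm (P j \<omega>))\<^sup>2 * (norm K)\<^sup>2)"
    using P_int2[OF assms] by auto
  then show ?thesis
  proof (rule Bochner_Integration.integrable_bound)
    show "(\<lambda>\<omega>. (P j \<omega> \<bullet> K)\<^sup>2) \<in> borel_measurable M" using P_meas[OF assms] by measurable
    show "AE x in M. norm ((P j x \<bullet> K)\<^sup>2) \<le> norm ((norm (P j x))\<^sup>2 * (norm K)\<^sup>2)"
      using inner_le_norm_sq by (auto intro!: AE_I2)
  qed
qed

lemma int_inner:
  assumes "j < T" shows "integrable M (\<lambda>\<omega>. P j \<omega> \<bullet> K)"
proof (rule square_integrable_imp_integrable)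
  show "(\<lambda>\<omega>. P j \<omega> \<bullet> K) \<in> borel_measurable M" using P_meas[OF assms] by measurable
qed (rule int_inner_sq[OF assms])

lemma P_comp_meas:
  assumes "j < T" shows "(\<lambda>\<omega>. P j \<omega> $ i) \<in> borel_measurable M"
  using measurable_compose[OF P_meas[OF assms] borel_measurable_nth] by simp

lemma int_comp:
  assumes "j < T" shows "integrable M (\<lambda>\<omega>. P j \<omega> $ i)"
  using int_inner[OF assms, of "axis i 1"] by (simp add: inner_axis)

lemma int_comp2:
  assumes "j < T" shows "integrable M (\<lambda>\<omega>. P j \<omega> $ i * P j \<omega> $ l)"
proof -
  have "integrable M (\<lambda>\<omega>. (norm (P j \<omega>))\<^sup>2)" using P_int2[OF assms] .
  then show ?thesis
  proof (rule Bochner_Integration.integrable_bound)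
    show "(\<lambda>\<omega>. P j \<omega> $ i * P j \<omega> $ l) \<in> borel_measurable M" by (intro borel_measurable_times P_comp_meas assms)
    show "AE x in M. norm (P j x $ i * P j x $ l) \<le> norm ((norm (P j x))\<^sup>2)"
    proof (intro AE_I2)
      fix x
      have a: "\<bar>P j x $ i\<bar> \<le> norm (P j x)" "\<bar>P j x $ l\<bar> \<le> norm (P j x)"
        by (simp_all add: component_le_norm_cart)
      show "norm (P j x $ i * P j x $ l) \<le> norm ((norm (P j x))\<^sup>2)"
        using mult_mono[OF a] by (simp add: abs_mult power2_eq_square)
    qed
  qed
qed

lemma mean_inner:
  assumes "j < T" shows "integral\<^sup>L M (\<lambda>\<omega>. P j \<omega> \<bullet> K) = mean_vec M (P j) \<bullet> K"
proof -
  have "integral\<^sup>L M (\<lambda>\<omega>. P j \<omega> \<bullet> K) = integral\<^sup>L M (\<lambda>\<omega>. \<Sum>i\<in>UNIV. P j \<omega> $ i * K $ i)"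
    by (simp add: inner_vec_def inner_real_def)
  also have "\<dots> = (\<Sum>i\<in>UNIV. integral\<^sup>L M (\<lambda>\<omega>. P j \<omega> $ i) * K $ i)"
    using int_comp[OF assms] by (simp add: Bochner_Integration.integral_sum)
  finally show ?thesis by (simp add: mean_vec_def inner_vec_def inner_real_def)
qed

lemma smom_inner:
  assumes "j < T" shows "integral\<^sup>L M (\<lambda>\<omega>. (P j \<omega> \<bullet> K)\<^sup>2) = K \<bullet> (smom_mat M (P j) *v K)"
proof -
  have "integral\<^sup>L M (\<lambda>\<omega>. (P j \<omega> \<bullet> K)\<^sup>2)
      = integral\<^sup>L M (\<lambda>\<omega>. \<Sum>i\<in>UNIV. \<Sum>l\<in>UNIV. K $ i * (P j \<omega> $ i * P j \<omega> $ l) * K $ l)"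
    unfolding inner_vec_def inner_real_def power2_eq_square sum_product
    by (intro Bochner_Integration.integral_cong refl sum.cong) (simp add: mult_ac)
  also have "\<dots> = (\<Sum>i\<in>UNIV. \<Sum>l\<in>UNIV. K $ i * integral\<^sup>L M (\<lambda>\<omega>. P j \<omega> $ i * P j \<omega> $ l) * K $ l)"
    using int_comp2[OF assms] by (simp add: Bochner_Integration.integral_sum)
  finally show ?thesis
    unfolding smom_mat_def inner_vec_def inner_real_def matrix_vector_mult_def sum_distrib_left
    by (simp add: sum_distrib_left mult.assoc)
qed

lemma meas_inner: "j < T \<Longrightarrow> (\<lambda>\<omega>. P j \<omega> \<bullet> K) \<in> borel_measurable M"
  using P_meas by measurable

lemma int_ind:
  fixes f e :: "'a \<Rightarrow> real"
  assumes "integrable M f" "e \<in> borel_measurable M" "\<And>\<omega>. \<bar>e \<omega>\<bar> \<le> 1"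
  shows "integrable M (\<lambda>\<omega>. f \<omega> * e \<omega>)"
  using assms(1)
proof (rule Bochner_Integration.integrable_bound)
  show "(\<lambda>\<omega>. f \<omega> * e \<omega>) \<in> borel_measurable M"
    using borel_measurable_integrable[OF assms(1)] assms(2) by measurable
  show "AE x in M. norm (f x * e x) \<le> norm (f x)"
    using assms(3) by (intro AE_I2) (simp add: abs_mult mult_left_le)
qed

lemma int_Z: "j < T \<Longrightarrow> integrable M (\<lambda>\<omega>. s j + P j \<omega> \<bullet> K)"
  using int_inner by (intro Bochner_Integration.integrable_add) auto

lemma int_ZPK: assumes "j < T" shows "integrable M (\<lambda>\<omega>. (s j + P j \<omega> \<bullet> K) * (P j \<omega> \<bullet> K))"
proof -
  have "integrable M (\<lambda>\<omega>. s j * (P j \<omega> \<bullet> K) + (P j \<omega> \<bullet> K)\<^sup>2)"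
    using int_inner[OF assms] int_inner_sq[OF assms] by (intro Bochner_Integration.integrable_add) auto
  then show ?thesis by (simp add: algebra_simps power2_eq_square)
qed

lemma int_Z2: assumes "j < T" shows "integrable M (\<lambda>\<omega>. (s j + P j \<omega> \<bullet> K)\<^sup>2)"
proof -
  have "integrable M (\<lambda>\<omega>. (s j)\<^sup>2 + (2 * s j * (P j \<omega> \<bullet> K) + (P j \<omega> \<bullet> K)\<^sup>2))"
    using int_inner[OF assms] int_inner_sq[OF assms]
    by (intro Bochner_Integration.integrable_add) auto
  then show ?thesis by (simp add: algebra_simps power2_eq_square)
qed

lemma G_ints:
  fixes e :: "real \<Rightarrow> real"
  assumes k: "k < T" and e: "e \<in> borel_measurable borel" "\<And>z. \<bar>e z\<bar> \<le> 1"
  shows "integrable M (\<lambda>\<omega>. c * (s k + P k \<omega> \<bullet> K) * e (s k + P k \<omega> \<bullet> K))"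
    "integrable M (\<lambda>\<omega>. c * (s k + P k \<omega> \<bullet> K) * (P k \<omega> \<bullet> K) * e (s k + P k \<omega> \<bullet> K))"
    "integrable M (\<lambda>\<omega>. c * (s k + P k \<omega> \<bullet> K)\<^sup>2 * e (s k + P k \<omega> \<bullet> K))"
proof -
  have me: "(\<lambda>\<omega>. e (s k + P k \<omega> \<bullet> K)) \<in> borel_measurable M"
    using measurable_compose[OF borel_measurable_integrable[OF int_Z[OF k]] e(1)] .
  have i1: "integrable M (\<lambda>\<omega>. c * (s k + P k \<omega> \<bullet> K))"
    using int_Z[OF k] by (rule integrable_mult_right)
  have i2: "integrable M (\<lambda>\<omega>. c * (s k + P k \<omega> \<bullet> K) * (P k \<omega> \<bullet> K))"
    using integrable_mult_right[OF int_ZPK[OF k], of c] by (simp add: mult.assoc)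
  have i3: "integrable M (\<lambda>\<omega>. c * (s k + P k \<omega> \<bullet> K)\<^sup>2)"
    using int_Z2[OF k] by (rule integrable_mult_right)
  show "integrable M (\<lambda>\<omega>. c * (s k + P k \<omega> \<bullet> K) * e (s k + P k \<omega> \<bullet> K))"
    by (rule int_ind[OF i1 me e(2)])
  show "integrable M (\<lambda>\<omega>. c * (s k + P k \<omega> \<bullet> K) * (P k \<omega> \<bullet> K) * e (s k + P k \<omega> \<bullet> K))"
    by (rule int_ind[OF i2 me e(2)])
  show "integrable M (\<lambda>\<omega>. c * (s k + P k \<omega> \<bullet> K)\<^sup>2 * e (s k + P k \<omega> \<bullet> K))"
    by (rule int_ind[OF i3 me e(2)])
qed

lemma G1:
  fixes e1 e2 :: "real \<Rightarrow> real"
  assumes k: "k < T" and e: "e1 \<in> borel_measurable borel" "\<And>z. \<bar>e1 z\<bar> \<le> 1"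
    "e2 \<in> borel_measurable borel" "\<And>z. \<bar>e2 z\<bar> \<le> 1"
  shows "integral\<^sup>L M (\<lambda>\<omega>. cz * (s k + P k \<omega> \<bullet> K)
      + ca * (s k + P k \<omega> \<bullet> K) * e1 (s k + P k \<omega> \<bullet> K)
      + cb * (s k + P k \<omega> \<bullet> K) * e2 (s k + P k \<omega> \<bullet> K))
    = cz * (s k + mean_vec M (P k) \<bullet> K)
      + integral\<^sup>L M (\<lambda>\<omega>. ca * (s k + P k \<omega> \<bullet> K) * e1 (s k + P k \<omega> \<bullet> K))
      + integral\<^sup>L M (\<lambda>\<omega>. cb * (s k + P k \<omega> \<bullet> K) * e2 (s k + P k \<omega> \<bullet> K))"
proof -
  have iZ: "integrable M (\<lambda>\<omega>. cz * (s k + P k \<omega> \<bullet> K))"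
    using int_Z[OF k] by (rule integrable_mult_right)
  have "integral\<^sup>L M (\<lambda>\<omega>. cz * (s k + P k \<omega> \<bullet> K)) = cz * (s k + mean_vec M (P k) \<bullet> K)"
    using int_inner[OF k] mean_inner[OF k] by (simp add: prob_space)
  then show ?thesis
    using iZ G_ints(1)[OF k e(1,2), of ca K] G_ints(1)[OF k e(3,4), of cb K]
    by simp
qed

lemma G2:
  fixes e1 e2 :: "real \<Rightarrow> real"
  assumes k: "k < T" and e: "e1 \<in> borel_measurable borel" "\<And>z. \<bar>e1 z\<bar> \<le> 1"
    "e2 \<in> borel_measurable borel" "\<And>z. \<bar>e2 z\<bar> \<le> 1"
  shows "integral\<^sup>L M (\<lambda>\<omega>. cz\<^sup>2 * (s k + P k \<omega> \<bullet> K)\<^sup>2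
      + (2 * cz * ca + da) * (s k + P k \<omega> \<bullet> K)\<^sup>2 * e1 (s k + P k \<omega> \<bullet> K)
      + (2 * cz * cb + db) * (s k + P k \<omega> \<bullet> K)\<^sup>2 * e2 (s k + P k \<omega> \<bullet> K))
    = cz\<^sup>2 * ((s k)\<^sup>2 + 2 * s k * (mean_vec M (P k) \<bullet> K) + K \<bullet> (smom_mat M (P k) *v K))
      + 2 * cz * s k * integral\<^sup>L M (\<lambda>\<omega>. ca * (s k + P k \<omega> \<bullet> K) * e1 (s k + P k \<omega> \<bullet> K))
      + 2 * cz * integral\<^sup>L M (\<lambda>\<omega>. ca * (s k + P k \<omega> \<bullet> K) * (P k \<omega> \<bullet> K) * e1 (s k + P k \<omega> \<bullet> K))
      + integral\<^sup>L M (\<lambda>\<omega>. da * (s k + P k \<omega> \<bullet> K)\<^sup>2 * e1 (s k + P k \<omega> \<bullet> K))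
      + 2 * cz * s k * integral\<^sup>L M (\<lambda>\<omega>. cb * (s k + P k \<omega> \<bullet> K) * e2 (s k + P k \<omega> \<bullet> K))
      + 2 * cz * integral\<^sup>L M (\<lambda>\<omega>. cb * (s k + P k \<omega> \<bullet> K) * (P k \<omega> \<bullet> K) * e2 (s k + P k \<omega> \<bullet> K))
      + integral\<^sup>L M (\<lambda>\<omega>. db * (s k + P k \<omega> \<bullet> K)\<^sup>2 * e2 (s k + P k \<omega> \<bullet> K))"
proof -
  let ?Z = "\<lambda>\<omega>. s k + P k \<omega> \<bullet> K"
  let ?Q = "\<lambda>\<omega>. P k \<omega> \<bullet> K"
  define A1 where "A1 = (\<lambda>\<omega>. ca * ?Z \<omega> * e1 (?Z \<omega>))"
  define B1 where "B1 = (\<lambda>\<omega>. ca * ?Z \<omega> * ?Q \<omega> * e1 (?Z \<omega>))"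
  define C1 where "C1 = (\<lambda>\<omega>. da * (?Z \<omega>)\<^sup>2 * e1 (?Z \<omega>))"
  define A2 where "A2 = (\<lambda>\<omega>. cb * ?Z \<omega> * e2 (?Z \<omega>))"
  define B2 where "B2 = (\<lambda>\<omega>. cb * ?Z \<omega> * ?Q \<omega> * e2 (?Z \<omega>))"
  define C2 where "C2 = (\<lambda>\<omega>. db * (?Z \<omega>)\<^sup>2 * e2 (?Z \<omega>))"
  define Z2 where "Z2 = (\<lambda>\<omega>. (s k)\<^sup>2 + 2 * s k * ?Q \<omega> + (?Q \<omega>)\<^sup>2)"
  have iA1: "integrable M A1" unfolding A1_def by (rule G_ints(1)[OF k e(1,2)])
  have iB1: "integrable M B1" unfolding B1_def by (rule G_ints(2)[OF k e(1,2)])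
  have iC1: "integrable M C1" unfolding C1_def by (rule G_ints(3)[OF k e(1,2)])
  have iA2: "integrable M A2" unfolding A2_def by (rule G_ints(1)[OF k e(3,4)])
  have iB2: "integrable M B2" unfolding B2_def by (rule G_ints(2)[OF k e(3,4)])
  have iC2: "integrable M C2" unfolding C2_def by (rule G_ints(3)[OF k e(3,4)])
  have iQ: "integrable M ?Q" by (rule int_inner[OF k])
  have iQ2: "integrable M (\<lambda>\<omega>. (?Q \<omega>)\<^sup>2)" by (rule int_inner_sq[OF k])
  have iZ2: "integrable M Z2" unfolding Z2_def using iQ iQ2 by simp
  have eZ2: "integral\<^sup>L M Z2 = (s k)\<^sup>2 + 2 * s k * (mean_vec M (P k) \<bullet> K) + K \<bullet> (smom_mat M (P k) *v K)"
    unfolding Z2_def using iQ iQ2 mean_inner[OF k] smom_inner[OF k] by (simp add: prob_space)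
  have pw: "cz\<^sup>2 * (?Z \<omega>)\<^sup>2 + (2 * cz * ca + da) * (?Z \<omega>)\<^sup>2 * e1 (?Z \<omega>)
      + (2 * cz * cb + db) * (?Z \<omega>)\<^sup>2 * e2 (?Z \<omega>)
    = cz\<^sup>2 * Z2 \<omega> + (2 * cz * s k) * A1 \<omega> + (2 * cz) * B1 \<omega> + C1 \<omega>
      + (2 * cz * s k) * A2 \<omega> + (2 * cz) * B2 \<omega> + C2 \<omega>" for \<omega>
    unfolding A1_def B1_def C1_def A2_def B2_def C2_def Z2_def
    by (simp add: power2_eq_square algebra_simps)
  have "integral\<^sup>L M (\<lambda>\<omega>. cz\<^sup>2 * (?Z \<omega>)\<^sup>2 + (2 * cz * ca + da) * (?Z \<omega>)\<^sup>2 * e1 (?Z \<omega>)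
      + (2 * cz * cb + db) * (?Z \<omega>)\<^sup>2 * e2 (?Z \<omega>))
    = cz\<^sup>2 * integral\<^sup>L M Z2 + (2 * cz * s k) * integral\<^sup>L M A1 + (2 * cz) * integral\<^sup>L M B1 + integral\<^sup>L M C1
      + (2 * cz * s k) * integral\<^sup>L M A2 + (2 * cz) * integral\<^sup>L M B2 + integral\<^sup>L M C2"
    unfolding pw using iZ2 iA1 iB1 iC1 iA2 iB2 iC2 by simp
  then show ?thesis unfolding eZ2 by (simp add: A1_def B1_def C1_def A2_def B2_def C2_def)
qed

lemma ind_bound: "\<bar>(if b then 1 else 0::real)\<bar> \<le> 1" by simp

end

locale mv2 = mv M T s P
  for M :: "'a measure" and T :: nat and s :: "nat \<Rightarrow> real" and P :: "nat \<Rightarrow> 'a \<Rightarrow> real^'n" +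
  fixes \<rho> :: "nat \<Rightarrow> real" and Kp Km :: "nat \<Rightarrow> real^'n" and ap am bp bm :: "nat \<Rightarrow> real"
  assumes rho_def: "\<And>j. \<rho> j = (\<Prod>i\<in>{j..<T}. s i)"
    and aT: "ap T = 0" "am T = 0"
    and bT: "bp T = 0" "bm T = 0"
    and ap_rec: "\<And>j. j < T \<Longrightarrow> ap j =
        \<rho> (Suc j) * (mean_vec M (P j) \<bullet> Kp j)
        + integral\<^sup>L M (\<lambda>\<omega>. ap (Suc j) * (s j + P j \<omega> \<bullet> Kp j)
              * (if s j + P j \<omega> \<bullet> Kp j \<ge> 0 then 1 else 0))
        + integral\<^sup>L M (\<lambda>\<omega>. am (Suc j) * (s j + P j \<omega> \<bullet> Kp j)
              * (if s j + P j \<omega> \<bullet> Kp j < 0 then 1 else 0))"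
    and am_rec: "\<And>j. j < T \<Longrightarrow> am j =
        \<rho> (Suc j) * (mean_vec M (P j) \<bullet> Km j)
        + integral\<^sup>L M (\<lambda>\<omega>. ap (Suc j) * (s j + P j \<omega> \<bullet> Km j)
              * (if s j + P j \<omega> \<bullet> Km j \<le> 0 then 1 else 0))
        + integral\<^sup>L M (\<lambda>\<omega>. am (Suc j) * (s j + P j \<omega> \<bullet> Km j)
              * (if s j + P j \<omega> \<bullet> Km j > 0 then 1 else 0))"
    and bp_rec: "\<And>j. j < T \<Longrightarrow> bp j =
        (\<rho> (Suc j))\<^sup>2 * (Kp j \<bullet> (smom_mat M (P j) *v Kp j))
        + 2 * \<rho> (Suc j) * integral\<^sup>L M (\<lambda>\<omega>. ap (Suc j) * (s j + P j \<omega> \<bullet> Kp j) * (P j \<omega> \<bullet> Kp j)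
              * (if s j + P j \<omega> \<bullet> Kp j \<ge> 0 then 1 else 0))
        + 2 * \<rho> (Suc j) * integral\<^sup>L M (\<lambda>\<omega>. am (Suc j) * (s j + P j \<omega> \<bullet> Kp j) * (P j \<omega> \<bullet> Kp j)
              * (if s j + P j \<omega> \<bullet> Kp j < 0 then 1 else 0))
        + integral\<^sup>L M (\<lambda>\<omega>. bp (Suc j) * (s j + P j \<omega> \<bullet> Kp j)\<^sup>2
              * (if s j + P j \<omega> \<bullet> Kp j \<ge> 0 then 1 else 0))
        + integral\<^sup>L M (\<lambda>\<omega>. bm (Suc j) * (s j + P j \<omega> \<bullet> Kp j)\<^sup>2
              * (if s j + P j \<omega> \<bullet> Kp j < 0 then 1 else 0))"
    and bm_rec: "\<And>j. j < T \<Longrightarrow> bm j =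
        (\<rho> (Suc j))\<^sup>2 * (Km j \<bullet> (smom_mat M (P j) *v Km j))
        + 2 * \<rho> (Suc j) * integral\<^sup>L M (\<lambda>\<omega>. ap (Suc j) * (s j + P j \<omega> \<bullet> Km j) * (P j \<omega> \<bullet> Km j)
              * (if s j + P j \<omega> \<bullet> Km j \<le> 0 then 1 else 0))
        + 2 * \<rho> (Suc j) * integral\<^sup>L M (\<lambda>\<omega>. am (Suc j) * (s j + P j \<omega> \<bullet> Km j) * (P j \<omega> \<bullet> Km j)
              * (if s j + P j \<omega> \<bullet> Km j > 0 then 1 else 0))
        + integral\<^sup>L M (\<lambda>\<omega>. bp (Suc j) * (s j + P j \<omega> \<bullet> Km j)\<^sup>2
              * (if s j + P j \<omega> \<bullet> Km j \<le> 0 then 1 else 0))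
        + integral\<^sup>L M (\<lambda>\<omega>. bm (Suc j) * (s j + P j \<omega> \<bullet> Km j)\<^sup>2
              * (if s j + P j \<omega> \<bullet> Km j > 0 then 1 else 0))"
begin

interpretation prob_space M by (rule M)

definition Zf :: "nat \<Rightarrow> real \<Rightarrow> real^'n \<Rightarrow> real" where
  "Zf k y v = s k + v \<bullet> (if 0 \<le> y then Kp k else Km k)"

definition \<phi>1 :: "nat \<Rightarrow> real \<Rightarrow> real" where
  "\<phi>1 k w = \<rho> k * w + ap k * w * (if 0 \<le> w then 1 else 0) + am k * w * (if w < 0 then 1 else 0)"

definition \<phi>2 :: "nat \<Rightarrow> real \<Rightarrow> real" where
  "\<phi>2 k w = (\<rho> k)\<^sup>2 * w\<^sup>2 + (2 * \<rho> k * ap k + bp k) * w\<^sup>2 * (if 0 \<le> w then 1 else 0)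
     + (2 * \<rho> k * am k + bm k) * w\<^sup>2 * (if w < 0 then 1 else 0)"

lemma rho_step: "k < T \<Longrightarrow> \<rho> k = s k * \<rho> (Suc k)"
  by (simp add: rho_def prod.atLeast_Suc_lessThan)

lemma ind_meas1: "(\<lambda>z::real. if 0 \<le> z then 1 else 0::real) \<in> borel_measurable borel"
  by measurable
lemma ind_meas2: "(\<lambda>z::real. if z < 0 then 1 else 0::real) \<in> borel_measurable borel"
  by measurable
lemma ind_meas3: "(\<lambda>z::real. if z \<le> 0 then 1 else 0::real) \<in> borel_measurable borel"
  by measurable
lemma ind_meas4: "(\<lambda>z::real. if 0 < z then 1 else 0::real) \<in> borel_measurable borel"
  by measurable
lemmas ind_meas = ind_meas1 ind_meas2 ind_meas3 ind_meas4

lemma sgn_pos: "0 < y \<Longrightarrow> (0 \<le> y * z) = (0 \<le> (z::real))" "0 < y \<Longrightarrow> (y * z < 0) = (z < 0)"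
  by (simp_all add: zero_le_mult_iff mult_less_0_iff)

lemma sgn_neg: "y < 0 \<Longrightarrow> (0 \<le> y * z) = (z \<le> (0::real))" "y < 0 \<Longrightarrow> (y * z < 0) = (0 < z)"
  by (auto simp add: zero_le_mult_iff mult_less_0_iff)

lemma Zf_pos: "0 \<le> y \<Longrightarrow> Zf k y v = s k + v \<bullet> Kp k"
  by (simp add: Zf_def)

lemma Zf_neg: "y < 0 \<Longrightarrow> Zf k y v = s k + v \<bullet> Km k"
  by (simp add: Zf_def)

lemma step1:
  assumes k: "k < T"
  shows "integral\<^sup>L M (\<lambda>\<omega>. \<phi>1 (Suc k) (y * Zf k y (P k \<omega>))) = \<phi>1 k y"
proof (cases y "0::real" rule: linorder_cases)
  case greater
  let ?Z = "\<lambda>\<omega>. s k + P k \<omega> \<bullet> Kp k"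
  note G = G1[OF k ind_meas(1) ind_bound ind_meas(2) ind_bound,
      where cz="\<rho> (Suc k)" and ca="ap (Suc k)" and cb="am (Suc k)" and K="Kp k"]
  have pw: "\<phi>1 (Suc k) (y * Zf k y (P k \<omega>)) = y * (\<rho> (Suc k) * ?Z \<omega>
      + ap (Suc k) * ?Z \<omega> * (if 0 \<le> ?Z \<omega> then 1 else 0) + am (Suc k) * ?Z \<omega> * (if ?Z \<omega> < 0 then 1 else 0))" for \<omega>
    unfolding \<phi>1_def Zf_pos[OF less_imp_le[OF greater]] sgn_pos[OF greater] by (simp add: algebra_simps)
  have "integral\<^sup>L M (\<lambda>\<omega>. \<phi>1 (Suc k) (y * Zf k y (P k \<omega>))) = y * integral\<^sup>L M (\<lambda>\<omega>. \<rho> (Suc k) * ?Z \<omega>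
      + ap (Suc k) * ?Z \<omega> * (if 0 \<le> ?Z \<omega> then 1 else 0) + am (Suc k) * ?Z \<omega> * (if ?Z \<omega> < 0 then 1 else 0))"
    unfolding pw by (rule integral_mult_right_zero)
  also note G
  finally show ?thesis
    using greater by (simp add: \<phi>1_def ap_rec[OF k] rho_step[OF k] algebra_simps)
next
  case less
  let ?Z = "\<lambda>\<omega>. s k + P k \<omega> \<bullet> Km k"
  note G = G1[OF k ind_meas(3) ind_bound ind_meas(4) ind_bound,
      where cz="\<rho> (Suc k)" and ca="ap (Suc k)" and cb="am (Suc k)" and K="Km k"]
  have pw: "\<phi>1 (Suc k) (y * Zf k y (P k \<omega>)) = y * (\<rho> (Suc k) * ?Z \<omega>
      + ap (Suc k) * ?Z \<omega> * (if ?Z \<omega> \<le> 0 then 1 else 0) + am (Suc k) * ?Z \<omega> * (if 0 < ?Z \<omega> then 1 else 0))" for \<omega>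
    unfolding \<phi>1_def Zf_neg[OF less] sgn_neg[OF less] by (simp add: algebra_simps)
  have "integral\<^sup>L M (\<lambda>\<omega>. \<phi>1 (Suc k) (y * Zf k y (P k \<omega>))) = y * integral\<^sup>L M (\<lambda>\<omega>. \<rho> (Suc k) * ?Z \<omega>
      + ap (Suc k) * ?Z \<omega> * (if ?Z \<omega> \<le> 0 then 1 else 0) + am (Suc k) * ?Z \<omega> * (if 0 < ?Z \<omega> then 1 else 0))"
    unfolding pw by (rule integral_mult_right_zero)
  also note G
  finally show ?thesis
    using less by (simp add: \<phi>1_def am_rec[OF k] rho_step[OF k] algebra_simps)
qed (simp add: \<phi>1_def)

lemma step2:
  assumes k: "k < T"
  shows "integral\<^sup>L M (\<lambda>\<omega>. \<phi>2 (Suc k) (y * Zf k y (P k \<omega>))) = \<phi>2 k y"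
proof (cases y "0::real" rule: linorder_cases)
  case greater
  let ?Z = "\<lambda>\<omega>. s k + P k \<omega> \<bullet> Kp k"
  note G = G2[OF k ind_meas(1) ind_bound ind_meas(2) ind_bound,
      where cz="\<rho> (Suc k)" and ca="ap (Suc k)" and cb="am (Suc k)" and K="Kp k"
        and da="bp (Suc k)" and db="bm (Suc k)"]
  have pw: "\<phi>2 (Suc k) (y * Zf k y (P k \<omega>)) = y\<^sup>2 * ((\<rho> (Suc k))\<^sup>2 * (?Z \<omega>)\<^sup>2
      + (2 * \<rho> (Suc k) * ap (Suc k) + bp (Suc k)) * (?Z \<omega>)\<^sup>2 * (if 0 \<le> ?Z \<omega> then 1 else 0)
      + (2 * \<rho> (Suc k) * am (Suc k) + bm (Suc k)) * (?Z \<omega>)\<^sup>2 * (if ?Z \<omega> < 0 then 1 else 0))" for \<omega>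
    unfolding \<phi>2_def Zf_pos[OF less_imp_le[OF greater]] sgn_pos[OF greater] by (simp add: power_mult_distrib) (simp add: algebra_simps)
  have "integral\<^sup>L M (\<lambda>\<omega>. \<phi>2 (Suc k) (y * Zf k y (P k \<omega>))) = y\<^sup>2 * integral\<^sup>L M (\<lambda>\<omega>. (\<rho> (Suc k))\<^sup>2 * (?Z \<omega>)\<^sup>2
      + (2 * \<rho> (Suc k) * ap (Suc k) + bp (Suc k)) * (?Z \<omega>)\<^sup>2 * (if 0 \<le> ?Z \<omega> then 1 else 0)
      + (2 * \<rho> (Suc k) * am (Suc k) + bm (Suc k)) * (?Z \<omega>)\<^sup>2 * (if ?Z \<omega> < 0 then 1 else 0))"
    unfolding pw by (rule integral_mult_right_zero)
  also note G
  finally show ?thesis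
    using greater by (simp add: \<phi>2_def ap_rec[OF k] bp_rec[OF k] rho_step[OF k] algebra_simps power2_eq_square)
next
  case less
  let ?Z = "\<lambda>\<omega>. s k + P k \<omega> \<bullet> Km k"
  note G = G2[OF k ind_meas(3) ind_bound ind_meas(4) ind_bound,
      where cz="\<rho> (Suc k)" and ca="ap (Suc k)" and cb="am (Suc k)" and K="Km k"
        and da="bp (Suc k)" and db="bm (Suc k)"]
  have pw: "\<phi>2 (Suc k) (y * Zf k y (P k \<omega>)) = y\<^sup>2 * ((\<rho> (Suc k))\<^sup>2 * (?Z \<omega>)\<^sup>2
      + (2 * \<rho> (Suc k) * ap (Suc k) + bp (Suc k)) * (?Z \<omega>)\<^sup>2 * (if ?Z \<omega> \<le> 0 then 1 else 0)
      + (2 * \<rho> (Suc k) * am (Suc k) + bm (Suc k)) * (?Z \<omega>)\<^sup>2 * (if 0 < ?Z \<omega> then 1 else 0))" for \<omega>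
    unfolding \<phi>2_def Zf_neg[OF less] sgn_neg[OF less] by (simp add: power_mult_distrib) (simp add: algebra_simps)
  have "integral\<^sup>L M (\<lambda>\<omega>. \<phi>2 (Suc k) (y * Zf k y (P k \<omega>))) = y\<^sup>2 * integral\<^sup>L M (\<lambda>\<omega>. (\<rho> (Suc k))\<^sup>2 * (?Z \<omega>)\<^sup>2
      + (2 * \<rho> (Suc k) * ap (Suc k) + bp (Suc k)) * (?Z \<omega>)\<^sup>2 * (if ?Z \<omega> \<le> 0 then 1 else 0)
      + (2 * \<rho> (Suc k) * am (Suc k) + bm (Suc k)) * (?Z \<omega>)\<^sup>2 * (if 0 < ?Z \<omega> then 1 else 0))"
    unfolding pw by (rule integral_mult_right_zero)
  also note G
  finally show ?thesis
    using less by (simp add: \<phi>2_def am_rec[OF k] bm_rec[OF k] rho_step[OF k] algebra_simps power2_eq_square)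
qed (simp add: \<phi>2_def)


lemma int_step2:
  assumes k: "k < T"
  shows "integrable M (\<lambda>\<omega>. \<phi>2 (Suc k) (y * Zf k y (P k \<omega>)))"
proof (cases y "0::real" rule: linorder_cases)
  case greater
  let ?Z = "\<lambda>\<omega>. s k + P k \<omega> \<bullet> Kp k"
  have pw: "\<phi>2 (Suc k) (y * Zf k y (P k \<omega>)) = y\<^sup>2 * ((\<rho> (Suc k))\<^sup>2 * (?Z \<omega>)\<^sup>2
      + (2 * \<rho> (Suc k) * ap (Suc k) + bp (Suc k)) * (?Z \<omega>)\<^sup>2 * (if 0 \<le> ?Z \<omega> then 1 else 0)
      + (2 * \<rho> (Suc k) * am (Suc k) + bm (Suc k)) * (?Z \<omega>)\<^sup>2 * (if ?Z \<omega> < 0 then 1 else 0))" for \<omega>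
    unfolding \<phi>2_def Zf_pos[OF less_imp_le[OF greater]] sgn_pos[OF greater] by (simp add: power_mult_distrib) (simp add: algebra_simps)
  show ?thesis unfolding pw
    using integrable_mult_right[OF int_Z2[OF k], of "(\<rho> (Suc k))\<^sup>2"]
      G_ints(3)[OF k ind_meas(1) ind_bound] G_ints(3)[OF k ind_meas(2) ind_bound]
    by (intro integrable_mult_right Bochner_Integration.integrable_add) auto
next
  case less
  let ?Z = "\<lambda>\<omega>. s k + P k \<omega> \<bullet> Km k"
  have pw: "\<phi>2 (Suc k) (y * Zf k y (P k \<omega>)) = y\<^sup>2 * ((\<rho> (Suc k))\<^sup>2 * (?Z \<omega>)\<^sup>2
      + (2 * \<rho> (Suc k) * ap (Suc k) + bp (Suc k)) * (?Z \<omega>)\<^sup>2 * (if ?Z \<omega> \<le> 0 then 1 else 0)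
      + (2 * \<rho> (Suc k) * am (Suc k) + bm (Suc k)) * (?Z \<omega>)\<^sup>2 * (if 0 < ?Z \<omega> then 1 else 0))" for \<omega>
    unfolding \<phi>2_def Zf_neg[OF less] sgn_neg[OF less] by (simp add: power_mult_distrib) (simp add: algebra_simps)
  show ?thesis unfolding pw
    using integrable_mult_right[OF int_Z2[OF k], of "(\<rho> (Suc k))\<^sup>2"]
      G_ints(3)[OF k ind_meas(3) ind_bound] G_ints(3)[OF k ind_meas(4) ind_bound]
    by (intro integrable_mult_right Bochner_Integration.integrable_add) auto
qed (simp add: \<phi>2_def)

definition P' :: "nat \<Rightarrow> 'a \<Rightarrow> real^'n" where "P' i = (\<lambda>\<omega>. if i < T then P i \<omega> else 0)"
definition \<mu> :: "nat \<Rightarrow> (real^'n) measure" where "\<mu> i = distr M borel (P' i)"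

lemma P'_meas: "P' i \<in> borel_measurable M"
  by (cases "i < T") (simp_all add: P'_def P_meas)

lemma P'_eq: "i < T \<Longrightarrow> P' i \<omega> = P i \<omega>" by (simp add: P'_def)

lemma prob_mu: "prob_space (\<mu> i)" unfolding \<mu>_def by (rule prob_space_distr[OF P'_meas])

lemma sets_mu[simp]: "sets (\<mu> i) = sets borel" by (simp add: \<mu>_def)
lemma space_mu[simp]: "space (\<mu> i) = UNIV" by (simp add: \<mu>_def)

interpretation PS: product_sigma_finite \<mu>
  unfolding product_sigma_finite_def using prob_mu prob_space_imp_sigma_finite by blast

lemma prob_PiM: "prob_space (PiM I \<mu>)" by (rule prob_space_PiM) (rule prob_mu)

lemma coord_meas: "i \<in> I \<Longrightarrow> (\<lambda>x. x i) \<in> borel_measurable (PiM I \<mu>)"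
  using measurable_component_singleton[of i I \<mu>] measurable_cong_sets[OF refl sets_mu[of i], of "PiM I \<mu>"] by simp

lemma meas_mu: assumes "f \<in> borel_measurable borel" shows "f \<in> borel_measurable (\<mu> i)"
  using assms unfolding measurable_def by simp

function fin :: "nat \<Rightarrow> real \<Rightarrow> (nat \<Rightarrow> real^'n) \<Rightarrow> real" where
  "fin k y b = (if T \<le> k then y else fin (Suc k) (y * Zf k y (b k)) b)"
  by auto
termination by (relation "Wellfounded.measure (\<lambda>(k,y,b). T - k)") auto

declare fin.simps[simp del]

lemma fin_T: "T \<le> k \<Longrightarrow> fin k y b = y" by (simp add: fin.simps)
lemma fin_S: "k < T \<Longrightarrow> fin k y b = fin (Suc k) (y * Zf k y (b k)) b"
  by (subst fin.simps) simp

lemma fin_cong: "(\<And>i. k \<le> i \<Longrightarrow> i < T \<Longrightarrow> b i = b' i) \<Longrightarrow> fin k y b = fin k y b'"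
proof (induction k y b arbitrary: b' rule: fin.induct)
  case (1 k y b)
  show ?case
  proof (cases "T \<le> k")
    case True then show ?thesis by (simp add: fin_T)
  next
    case False
    then have k: "k < T" by simp
    have "fin (Suc k) (y * Zf k y (b k)) b = fin (Suc k) (y * Zf k y (b k)) b'"
      using 1 False by simp
    then show ?thesis using k 1(2)[of k] by (simp add: fin_S)
  qed
qed

lemma fin_meas:
  assumes "f \<in> borel_measurable N" "\<And>i. k \<le> i \<Longrightarrow> i < T \<Longrightarrow> (\<lambda>x. c x i) \<in> borel_measurable N"
  shows "(\<lambda>x. fin k (f x) (c x)) \<in> borel_measurable N"
  using assms
proof (induction "T - k" arbitrary: k f)
  case 0
  then have "T \<le> k" by simp
  then show ?case using 0 by (simp add: fin_T)
next
  case (Suc n)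
  then have k: "k < T" by simp
  have [measurable]: "f \<in> borel_measurable N" by (rule Suc.prems(1))
  have [measurable]: "(\<lambda>x. c x k) \<in> borel_measurable N" using Suc.prems(2)[of k] k by simp
  have m: "(\<lambda>x. f x * Zf k (f x) (c x k)) \<in> borel_measurable N"
    unfolding Zf_def by measurable
  have "(\<lambda>x. fin (Suc k) (f x * Zf k (f x) (c x k)) (c x)) \<in> borel_measurable N"
    using Suc.hyps(2) by (intro Suc.hyps(1)[OF _ m]) (auto intro: Suc.prems(2))
  then show ?case using k by (simp add: fin_S)
qed

lemma phi1_meas: "(\<lambda>v. \<phi>1 j (y * Zf k y v)) \<in> borel_measurable borel"
  unfolding \<phi>1_def Zf_def by measurable
lemma phi2_meas: "(\<lambda>v. \<phi>2 j (y * Zf k y v)) \<in> borel_measurable borel"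
  unfolding \<phi>2_def Zf_def by measurable


lemma key:
  assumes "k \<le> T"
  shows "integrable (PiM {k..<T} \<mu>) (\<lambda>b. (fin k y b)\<^sup>2) \<and> integral\<^sup>L (PiM {k..<T} \<mu>) (fin k y) = \<phi>1 k y
         \<and> integral\<^sup>L (PiM {k..<T} \<mu>) (\<lambda>b. (fin k y b)\<^sup>2) = \<phi>2 k y"
  using assms
proof (induction k arbitrary: y rule: inc_induct)
  case base
  interpret Q: prob_space "PiM {} \<mu>" by (rule prob_PiM)
  have r: "\<rho> T = 1" by (simp add: rho_def)
  show ?case by (simp add: fin_T \<phi>1_def \<phi>2_def r aT bT Q.prob_space Q.integrable_const)
next
  case (step n)
  have n: "n < T" by fact
  define J where "J = {Suc n..<T}"
  have J: "finite J" "n \<notin> J" "{n..<T} = insert n J" "{n..<T} = {n} \<union> J" "{n} \<inter> J = {}"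
    using n by (auto simp: J_def)
  interpret QJ: prob_space "PiM J \<mu>" by (rule prob_PiM)
  interpret Qn: prob_space "PiM {n..<T} \<mu>" by (rule prob_PiM)
  have IH: "integrable (PiM J \<mu>) (\<lambda>b. (fin (Suc n) w b)\<^sup>2) \<and> integral\<^sup>L (PiM J \<mu>) (fin (Suc n) w) = \<phi>1 (Suc n) w
         \<and> integral\<^sup>L (PiM J \<mu>) (\<lambda>b. (fin (Suc n) w b)\<^sup>2) = \<phi>2 (Suc n) w" for w
    using step.IH unfolding J_def by blast
  have finn_meas: "(\<lambda>b. fin n y b) \<in> borel_measurable (PiM {n..<T} \<mu>)"
    using fin_meas[where f="\<lambda>_. y" and N="PiM {n..<T} \<mu>" and k=n and c="\<lambda>x. x"] coord_meas by simp
  have finn_meas': "(\<lambda>b. fin n y b) \<in> borel_measurable (PiM (insert n J) \<mu>)"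
    using finn_meas J(3) by simp
  have fk: "fin n y (x(n := v)) = fin (Suc n) (y * Zf n y v) x" for x v
  proof -
    have "fin n y (x(n:=v)) = fin (Suc n) (y * Zf n y v) (x(n:=v))" using n by (simp add: fin_S)
    also have "\<dots> = fin (Suc n) (y * Zf n y v) x" by (rule fin_cong) auto
    finally show ?thesis .
  qed
  have fm: "fin n y (merge {n} J (x, z)) = fin (Suc n) (y * Zf n y (x n)) z" for x z
  proof -
    have "fin n y (merge {n} J (x, z)) = fin (Suc n) (y * Zf n y (x n)) (merge {n} J (x, z))"
      using n J(5) by (simp add: fin_S)
    also have "\<dots> = fin (Suc n) (y * Zf n y (x n)) z" by (rule fin_cong) (auto simp: J_def merge_def)
    finally show ?thesis .
  qed
  have phi2_nn: "0 \<le> \<phi>2 (Suc n) w" for w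
  proof -
    have "0 \<le> integral\<^sup>L (PiM J \<mu>) (\<lambda>b. (fin (Suc n) w b)\<^sup>2)"
      by (rule Bochner_Integration.integral_nonneg) simp
    then show ?thesis using IH[of w] by simp
  qed
  have ennm: "(\<lambda>v. ennreal (\<phi>2 (Suc n) (y * Zf n y v))) \<in> borel_measurable borel"
    using phi2_meas by measurable
  have nn: "(\<integral>\<^sup>+b. ennreal ((fin n y b)\<^sup>2) \<partial>PiM {n..<T} \<mu>) = ennreal (\<phi>2 n y)"
  proof -
    have "(\<integral>\<^sup>+b. ennreal ((fin n y b)\<^sup>2) \<partial>PiM {n..<T} \<mu>) = (\<integral>\<^sup>+b. ennreal ((fin n y b)\<^sup>2) \<partial>PiM (insert n J) \<mu>)"
      using J by simp
    also have "\<dots> = (\<integral>\<^sup>+ v. (\<integral>\<^sup>+ x. ennreal ((fin n y (x(n:=v)))\<^sup>2) \<partial>PiM J \<mu>) \<partial>\<mu> n)"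
      by (rule PS.product_nn_integral_insert_rev) (use J finn_meas' in auto)
    also have "\<dots> = (\<integral>\<^sup>+ v. ennreal (\<phi>2 (Suc n) (y * Zf n y v)) \<partial>\<mu> n)"
      unfolding fk using IH by (intro nn_integral_cong) (simp add: nn_integral_eq_integral)
    also have "\<dots> = (\<integral>\<^sup>+ \<omega>. ennreal (\<phi>2 (Suc n) (y * Zf n y (P' n \<omega>))) \<partial>M)"
      unfolding \<mu>_def by (rule nn_integral_distr[OF P'_meas]) (use ennm in simp)
    also have "\<dots> = (\<integral>\<^sup>+ \<omega>. ennreal (\<phi>2 (Suc n) (y * Zf n y (P n \<omega>))) \<partial>M)"
      using P'_eq[OF n] by simp
    also have "\<dots> = ennreal (integral\<^sup>L M (\<lambda>\<omega>. \<phi>2 (Suc n) (y * Zf n y (P n \<omega>))))"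
      by (rule nn_integral_eq_integral) (use int_step2[OF n] phi2_nn in auto)
    also have "\<dots> = ennreal (\<phi>2 n y)" using step2[OF n] by simp
    finally show ?thesis .
  qed
  have int2: "integrable (PiM {n..<T} \<mu>) (\<lambda>b. (fin n y b)\<^sup>2)"
    unfolding integrable_iff_bounded using finn_meas nn by simp
  have int1: "integrable (PiM {n..<T} \<mu>) (fin n y)"
    by (rule Qn.square_integrable_imp_integrable[OF finn_meas int2])
  have e1: "integral\<^sup>L (PiM {n..<T} \<mu>) (fin n y) = \<phi>1 n y"
  proof -
    have "integral\<^sup>L (PiM {n..<T} \<mu>) (fin n y) = integral\<^sup>L (PiM ({n} \<union> J) \<mu>) (fin n y)" using J by simp
    also have "\<dots> = (\<integral>x. (\<integral>z. fin n y (merge {n} J (x, z)) \<partial>PiM J \<mu>) \<partial>PiM {n} \<mu>)"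
      by (rule PS.product_integral_fold) (use J int1 in auto)
    also have "\<dots> = (\<integral>x. \<phi>1 (Suc n) (y * Zf n y (x n)) \<partial>PiM {n} \<mu>)"
      unfolding fm using IH by simp
    also have "\<dots> = integral\<^sup>L (\<mu> n) (\<lambda>v. \<phi>1 (Suc n) (y * Zf n y v))"
      by (rule PS.product_integral_singleton) (rule meas_mu[OF phi1_meas])
    also have "\<dots> = integral\<^sup>L M (\<lambda>\<omega>. \<phi>1 (Suc n) (y * Zf n y (P' n \<omega>)))"
      unfolding \<mu>_def by (rule integral_distr[OF P'_meas phi1_meas])
    also have "\<dots> = \<phi>1 n y" using step1[OF n] P'_eq[OF n] by simp
    finally show ?thesis .
  qed
  have e2: "integral\<^sup>L (PiM {n..<T} \<mu>) (\<lambda>b. (fin n y b)\<^sup>2) = \<phi>2 n y"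
  proof -
    have "integral\<^sup>L (PiM {n..<T} \<mu>) (\<lambda>b. (fin n y b)\<^sup>2) = integral\<^sup>L (PiM ({n} \<union> J) \<mu>) (\<lambda>b. (fin n y b)\<^sup>2)"
      using J by simp
    also have "\<dots> = (\<integral>x. (\<integral>z. (fin n y (merge {n} J (x, z)))\<^sup>2 \<partial>PiM J \<mu>) \<partial>PiM {n} \<mu>)"
      by (rule PS.product_integral_fold) (use J int2 in auto)
    also have "\<dots> = (\<integral>x. \<phi>2 (Suc n) (y * Zf n y (x n)) \<partial>PiM {n} \<mu>)"
      unfolding fm using IH by simp
    also have "\<dots> = integral\<^sup>L (\<mu> n) (\<lambda>v. \<phi>2 (Suc n) (y * Zf n y v))"
      by (rule PS.product_integral_singleton) (rule meas_mu[OF phi2_meas])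
    also have "\<dots> = integral\<^sup>L M (\<lambda>\<omega>. \<phi>2 (Suc n) (y * Zf n y (P' n \<omega>)))"
      unfolding \<mu>_def by (rule integral_distr[OF P'_meas phi2_meas])
    also have "\<dots> = \<phi>2 n y" using step2[OF n] P'_eq[OF n] by simp
    finally show ?thesis .
  qed
  show ?case using int2 e1 e2 by blast
qed


end

locale mv3 = mv2 M T s P \<rho> Kp Km ap am bp bm
  for M :: "'a measure" and T :: nat and s :: "nat \<Rightarrow> real" and P :: "nat \<Rightarrow> 'a \<Rightarrow> real^'n"
    and \<rho> :: "nat \<Rightarrow> real" and Kp Km :: "nat \<Rightarrow> real^'n" and ap am bp bm :: "nat \<Rightarrow> real" +
  fixes x0 W :: real and X Y :: "nat \<Rightarrow> 'a \<Rightarrow> real" and u :: "nat \<Rightarrow> 'a \<Rightarrow> real^'n" and t :: nat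
  assumes P_indep: "prob_space.indep_vars M (\<lambda>_. borel) P {..<T}"
    and X0: "\<And>\<omega>. \<omega> \<in> space M \<Longrightarrow> X 0 \<omega> = x0"
    and X_step: "\<And>j \<omega>. j < T \<Longrightarrow> \<omega> \<in> space M \<Longrightarrow>
        X (Suc j) \<omega> = s j * X j \<omega> + P j \<omega> \<bullet> u j \<omega>"
    and Y_def: "\<And>j \<omega>. Y j \<omega> = X j \<omega> - W / \<rho> j"
    and u_early_adapted: "\<And>j. j < t \<Longrightarrow> \<exists>g \<in> borel_measurable (PiM {..<j} (\<lambda>_. borel)).
        \<forall>\<omega> \<in> space M. u j \<omega> = g (\<lambda>i \<in> {..<j}. P i \<omega>)"
    and u_early_L2: "\<And>j. j < t \<Longrightarrow> integrable M (\<lambda>\<omega>. (norm (u j \<omega>))\<^sup>2)"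
    and u_policy: "\<And>j \<omega>. t \<le> j \<Longrightarrow> j < T \<Longrightarrow> \<omega> \<in> space M \<Longrightarrow>
        u j \<omega> = (Y j \<omega> * (if Y j \<omega> \<ge> 0 then 1 else 0)) *\<^sub>R Kp j
               + (Y j \<omega> * (if Y j \<omega> < 0 then 1 else 0)) *\<^sub>R Km j"
    and t_le: "t \<le> T"
begin

interpretation prob_space M by (rule M)
interpretation PS: product_sigma_finite \<mu>
  unfolding product_sigma_finite_def using prob_mu prob_space_imp_sigma_finite by blast

definition gch :: "nat \<Rightarrow> (nat \<Rightarrow> real^'n) \<Rightarrow> real^'n" where
  "gch j = (SOME g. g \<in> borel_measurable (PiM {..<j} (\<lambda>_. borel)) \<and> (\<forall>\<omega> \<in> space M. u j \<omega> = g (\<lambda>i \<in> {..<j}. P i \<omega>)))"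

lemma gch: assumes "j < t"
  shows "gch j \<in> borel_measurable (PiM {..<j} (\<lambda>_. borel))" "\<And>\<omega>. \<omega> \<in> space M \<Longrightarrow> u j \<omega> = gch j (\<lambda>i \<in> {..<j}. P i \<omega>)"
proof -
  have "\<exists>g. g \<in> borel_measurable (PiM {..<j} (\<lambda>_. borel)) \<and> (\<forall>\<omega> \<in> space M. u j \<omega> = g (\<lambda>i \<in> {..<j}. P i \<omega>))"
    using u_early_adapted[OF assms] by blast
  from someI_ex[OF this]
  show "gch j \<in> borel_measurable (PiM {..<j} (\<lambda>_. borel))" "\<And>\<omega>. \<omega> \<in> space M \<Longrightarrow> u j \<omega> = gch j (\<lambda>i \<in> {..<j}. P i \<omega>)"
    unfolding gch_def by blast+
qed

definition p :: "'a \<Rightarrow> nat \<Rightarrow> real^'n" where "p \<omega> = (\<lambda>i \<in> {..<T}. P i \<omega>)"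

definition Gt :: "(nat \<Rightarrow> real^'n) \<Rightarrow> real" where "Gt b = Xg s x0 gch t b - W / \<rho> t"

lemma rho_pos: "0 < \<rho> j"
  unfolding rho_def by (rule prod_pos) (use s_gt1 in force)

lemma X_rep: "j \<le> t \<Longrightarrow> \<omega> \<in> space M \<Longrightarrow> X j \<omega> = Xg s x0 gch j (p \<omega>)"
proof (induction j)
  case 0 then show ?case by (simp add: X0)
next
  case (Suc j)
  then have jt: "j < t" and jT: "j < T" using t_le by auto
  have r: "(\<lambda>i \<in> {..<j}. P i \<omega>) = restrict (p \<omega>) {..<j}"
    using jT by (auto simp: p_def restrict_def fun_eq_iff)
  have pj: "P j \<omega> = p \<omega> j" using jT by (simp add: p_def)
  have "X (Suc j) \<omega> = s j * X j \<omega> + P j \<omega> \<bullet> u j \<omega>" by (rule X_step[OF jT Suc.prems(2)])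
  also have "\<dots> = s j * Xg s x0 gch j (p \<omega>) + p \<omega> j \<bullet> gch j (restrict (p \<omega>) {..<j})"
    unfolding gch(2)[OF jt Suc.prems(2)] r pj[symmetric] using Suc by simp
  finally show ?case by simp
qed

lemma p_meas: "p \<in> measurable M (PiM {..<T} \<mu>)"
  unfolding p_def
proof (rule measurable_restrict)
  fix i assume "i \<in> {..<T}"
  then have "P i \<in> borel_measurable M" by (simp add: P_meas)
  then show "P i \<in> measurable M (\<mu> i)" unfolding measurable_def by simp
qed

lemma Xg_meas_gen: "{..<t} \<subseteq> I \<Longrightarrow> j \<le> t \<Longrightarrow> (\<lambda>b. Xg s x0 gch j b) \<in> borel_measurable (PiM I \<mu>)"
proof (induction j)
  case 0 then show ?case by simp
next
  case (Suc j)
  then have jt: "j < t" and jI: "j \<in> I" by auto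
  have r: "(\<lambda>f. restrict f {..<j}) \<in> measurable (PiM I \<mu>) (PiM {..<j} (\<lambda>_. borel))"
    by (rule measurable_restrict_subset') (use Suc.prems jt in auto)
  have [measurable]: "(\<lambda>b. gch j (restrict b {..<j})) \<in> borel_measurable (PiM I \<mu>)"
    using measurable_compose[OF r gch(1)[OF jt]] .
  have [measurable]: "(\<lambda>b. b j) \<in> borel_measurable (PiM I \<mu>)" by (rule coord_meas) (use jI in simp)
  have [measurable]: "(\<lambda>b. Xg s x0 gch j b) \<in> borel_measurable (PiM I \<mu>)" using Suc by simp
  have "(\<lambda>b. s j * Xg s x0 gch j b + b j \<bullet> gch j (restrict b {..<j})) \<in> borel_measurable (PiM I \<mu>)"
    by measurable
  then show ?case by (simp only: Xg.simps)
qed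

lemma Xg_meas: "j \<le> t \<Longrightarrow> (\<lambda>b. Xg s x0 gch j b) \<in> borel_measurable (PiM {..<T} \<mu>)"
  by (rule Xg_meas_gen) (use t_le in auto)

lemma X_meas: assumes "j \<le> t" shows "X j \<in> borel_measurable M"
proof -
  have "(\<lambda>\<omega>. Xg s x0 gch j (p \<omega>)) \<in> borel_measurable M"
    by (rule measurable_compose[OF p_meas Xg_meas[OF assms]])
  then show ?thesis
    by (rule measurable_cong[THEN iffD1, rotated]) (simp add: X_rep[OF assms])
qed

lemma Yt_rep: "\<omega> \<in> space M \<Longrightarrow> Y t \<omega> = Gt (p \<omega>)"
  using X_rep[of t] by (simp add: Y_def Gt_def)

lemma Gt_meas_gen: "{..<t} \<subseteq> I \<Longrightarrow> Gt \<in> borel_measurable (PiM I \<mu>)"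
proof -
  assume I: "{..<t} \<subseteq> I"
  have [measurable]: "(\<lambda>b. Xg s x0 gch t b) \<in> borel_measurable (PiM I \<mu>)" by (rule Xg_meas_gen[OF I]) simp
  have "(\<lambda>b. Xg s x0 gch t b - W / \<rho> t) \<in> borel_measurable (PiM I \<mu>)" by measurable
  then show ?thesis by (simp add: Gt_def[abs_def])
qed

lemma Gt_meas: "Gt \<in> borel_measurable (PiM {..<T} \<mu>)"
  by (rule Gt_meas_gen) (use t_le in auto)

lemma Yt_meas: "Y t \<in> borel_measurable M"
proof -
  have [measurable]: "X t \<in> borel_measurable M" by (rule X_meas) simp
  have "(\<lambda>\<omega>. X t \<omega> - W / \<rho> t) \<in> borel_measurable M" by measurable
  then show ?thesis by (simp add: Y_def[abs_def])
qed

lemma dyn: assumes "t \<le> j" "j < T" "\<omega> \<in> space M"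
  shows "Y (Suc j) \<omega> = Y j \<omega> * Zf j (Y j \<omega>) (P j \<omega>)"
proof -
  have u: "u j \<omega> = Y j \<omega> *\<^sub>R (if 0 \<le> Y j \<omega> then Kp j else Km j)"
    using u_policy[OF assms] by simp
  have r: "\<rho> j = s j * \<rho> (Suc j)" by (rule rho_step[OF assms(2)])
  have sp: "0 < s j" using s_gt1[OF assms(2)] by simp
  have rp: "0 < \<rho> (Suc j)" by (rule rho_pos)
  show ?thesis
    unfolding Y_def X_step[OF assms(2,3)] u Zf_def r
    using sp rp by (simp add: field_simps inner_scaleR_right)
qed

lemma YT_fin: "t \<le> j \<Longrightarrow> j \<le> T \<Longrightarrow> \<omega> \<in> space M \<Longrightarrow> Y T \<omega> = fin j (Y j \<omega>) (p \<omega>)"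
proof (induction "T - j" arbitrary: j)
  case 0 then have "j = T" by simp
  then show ?case by (simp add: fin_T)
next
  case (Suc n)
  then have jT: "j < T" by simp
  have "Y T \<omega> = fin (Suc j) (Y (Suc j) \<omega>) (p \<omega>)"
    using Suc.hyps(1)[of "Suc j"] Suc.hyps(2) Suc.prems by simp
  also have "\<dots> = fin j (Y j \<omega>) (p \<omega>)"
    using dyn[OF Suc.prems(1) jT Suc.prems(3)] jT by (simp add: fin_S p_def)
  finally show ?case .
qed

lemma X2_int: "j \<le> t \<Longrightarrow> integrable M (\<lambda>\<omega>. (X j \<omega>)\<^sup>2)"
proof (induction j)
  case 0
  have "integrable M (\<lambda>\<omega>. x0\<^sup>2)" by simp
  then show ?case by (rule Bochner_Integration.integrable_cong[THEN iffD1, rotated 2]) (simp_all add: X0)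
next
  case (Suc j)
  then have jt: "j < t" and jT: "j < T" using t_le by auto
  have ind: "indep_var (PiM {j} (\<lambda>_. borel)) (\<lambda>\<omega>. restrict (\<lambda>i. P i \<omega>) {j})
      (PiM {..<j} (\<lambda>_. borel)) (\<lambda>\<omega>. restrict (\<lambda>i. P i \<omega>) {..<j})"
    by (rule indep_var_restrict[OF P_indep]) (use jT in auto)
  have m1: "(\<lambda>x. (norm (x j))\<^sup>2) \<in> borel_measurable (PiM {j} (\<lambda>_::nat. borel::(real^'n) measure))"
    by measurable
  have m2: "(\<lambda>x. (norm (gch j x))\<^sup>2) \<in> borel_measurable (PiM {..<j} (\<lambda>_. borel))"
    using gch(1)[OF jt] by measurable
  have ind2: "indep_var borel (\<lambda>\<omega>. (norm (P j \<omega>))\<^sup>2) borel (\<lambda>\<omega>. (norm (gch j (restrict (\<lambda>i. P i \<omega>) {..<j})))\<^sup>2)"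
    using indep_var_compose[OF ind m1 m2] by (simp add: comp_def)
  have iu: "integrable M (\<lambda>\<omega>. (norm (gch j (restrict (\<lambda>i. P i \<omega>) {..<j})))\<^sup>2)"
    using u_early_L2[OF jt] gch(2)[OF jt] by (simp cong: Bochner_Integration.integrable_cong)
  have iPu: "integrable M (\<lambda>\<omega>. (norm (P j \<omega>))\<^sup>2 * (norm (gch j (restrict (\<lambda>i. P i \<omega>) {..<j})))\<^sup>2)"
    by (rule indep_var_integrable[OF ind2 P_int2[OF jT] iu])
  have iPu': "integrable M (\<lambda>\<omega>. (norm (P j \<omega>))\<^sup>2 * (norm (u j \<omega>))\<^sup>2)"
    using iPu gch(2)[OF jt] by (simp cong: Bochner_Integration.integrable_cong)
  have bnd: "integrable M (\<lambda>\<omega>. 2 * (s j)\<^sup>2 * (X j \<omega>)\<^sup>2 + 2 * ((norm (P j \<omega>))\<^sup>2 * (norm (u j \<omega>))\<^sup>2))"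
    using Suc.IH jt iPu' by simp
  show ?case using bnd
  proof (rule Bochner_Integration.integrable_bound)
    show "(\<lambda>\<omega>. (X (Suc j) \<omega>)\<^sup>2) \<in> borel_measurable M"
      using borel_measurable_power[OF X_meas[OF Suc.prems], of 2] .
    show "AE \<omega> in M. norm ((X (Suc j) \<omega>)\<^sup>2) \<le> norm (2 * (s j)\<^sup>2 * (X j \<omega>)\<^sup>2 + 2 * ((norm (P j \<omega>))\<^sup>2 * (norm (u j \<omega>))\<^sup>2))"
    proof (rule AE_I2)
      fix \<omega> assume w: "\<omega> \<in> space M"
      have a: "(P j \<omega> \<bullet> u j \<omega>)\<^sup>2 \<le> (norm (P j \<omega>))\<^sup>2 * (norm (u j \<omega>))\<^sup>2" by (rule inner_le_norm_sq)
      have b: "(a + b)\<^sup>2 \<le> 2 * a\<^sup>2 + 2 * b\<^sup>2" for a b :: real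
        using sum_squares_ge_zero[of "a - b" 0] by (simp add: power2_eq_square algebra_simps)
      have "(X (Suc j) \<omega>)\<^sup>2 \<le> 2 * (s j * X j \<omega>)\<^sup>2 + 2 * (P j \<omega> \<bullet> u j \<omega>)\<^sup>2"
        unfolding X_step[OF jT w] by (rule b)
      also have "\<dots> \<le> 2 * (s j)\<^sup>2 * (X j \<omega>)\<^sup>2 + 2 * ((norm (P j \<omega>))\<^sup>2 * (norm (u j \<omega>))\<^sup>2)"
        using a by (simp add: power_mult_distrib)
      finally show "norm ((X (Suc j) \<omega>)\<^sup>2) \<le> norm (2 * (s j)\<^sup>2 * (X j \<omega>)\<^sup>2 + 2 * ((norm (P j \<omega>))\<^sup>2 * (norm (u j \<omega>))\<^sup>2))"
        by simp
    qed
  qed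
qed


lemma distr_p: "distr M (PiM {..<T} \<mu>) p = PiM {..<T} \<mu>"
proof (cases "T = 0")
  case False
  have ind': "indep_vars (\<lambda>_. borel) P' {..<T}"
    using P_indep by (rule indep_vars_cong[THEN iffD1, rotated -1]) (auto simp: P'_def fun_eq_iff)
  have "distr M (PiM {..<T} (\<lambda>_. borel)) (\<lambda>x. \<lambda>i\<in>{..<T}. P' i x) = PiM {..<T} (\<lambda>i. distr M borel (P' i))"
    using indep_vars_iff_distr_eq_PiM[where I="{..<T}" and M'="\<lambda>_. borel" and X=P'] ind' False P'_meas by auto
  moreover have "distr M (PiM {..<T} \<mu>) p = distr M (PiM {..<T} (\<lambda>_. borel)) (\<lambda>x. \<lambda>i\<in>{..<T}. P' i x)"
    by (rule distr_cong) (auto simp: p_def P'_def intro!: sets_PiM_cong)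
  moreover have "(\<lambda>i. distr M borel (P' i)) = \<mu>" by (simp add: \<mu>_def fun_eq_iff)
  ultimately show ?thesis by simp
next
  case True
  then have E: "{..<T} = {}" by simp
  interpret Q: prob_space "PiM {} \<mu>" by (rule prob_PiM)
  show ?thesis
  proof (rule measure_eqI)
    show "sets (distr M (PiM {..<T} \<mu>) p) = sets (PiM {..<T} \<mu>)" by simp
    fix A assume "A \<in> sets (distr M (PiM {..<T} \<mu>) p)"
    then have A': "A \<in> sets (PiM {..<T} \<mu>)" by simp
    then have A: "A \<in> sets (PiM {} \<mu>)" unfolding E .
    then have "A \<subseteq> {\<lambda>_. undefined}" using sets.sets_into_space[OF A] by (simp add: PiM_empty)
    then have c: "A = {} \<or> A = {\<lambda>_. undefined}" by auto
    have pu: "p \<omega> = (\<lambda>_. undefined)" for \<omega> unfolding p_def E by (simp add: fun_eq_iff)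
    have e1: "emeasure (PiM {..<T} \<mu>) {\<lambda>_. undefined} = 1"
      unfolding E using Q.emeasure_space_1 by (simp add: PiM_empty)
    have ed: "emeasure (distr M (PiM {..<T} \<mu>) p) A = emeasure M (p -` A \<inter> space M)"
      by (rule emeasure_distr[OF p_meas A'])
    show "emeasure (distr M (PiM {..<T} \<mu>) p) A = emeasure (PiM {..<T} \<mu>) A"
      using c
    proof
      assume "A = {}" then show ?thesis unfolding ed by simp
    next
      assume a: "A = {\<lambda>_. undefined}"
      have "p -` A \<inter> space M = space M" using a pu by auto
      then show ?thesis unfolding ed using a e1 emeasure_space_1 by simp
    qed
  qed
qed

lemma tr_int: fixes h :: "(nat \<Rightarrow> real^'n) \<Rightarrow> real" assumes "h \<in> borel_measurable (PiM {..<T} \<mu>)"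
  shows "integral\<^sup>L (PiM {..<T} \<mu>) h = integral\<^sup>L M (\<lambda>\<omega>. h (p \<omega>))"
  using integral_distr[OF p_meas assms] distr_p by simp

lemma tr_nn: fixes h :: "(nat \<Rightarrow> real^'n) \<Rightarrow> real" assumes "h \<in> borel_measurable (PiM {..<T} \<mu>)"
  shows "(\<integral>\<^sup>+b. ennreal (h b) \<partial>PiM {..<T} \<mu>) = (\<integral>\<^sup>+\<omega>. ennreal (h (p \<omega>)) \<partial>M)"
proof -
  have "(\<integral>\<^sup>+b. ennreal (h b) \<partial>distr M (PiM {..<T} \<mu>) p) = (\<integral>\<^sup>+\<omega>. ennreal (h (p \<omega>)) \<partial>M)"
    by (rule nn_integral_distr[OF p_meas]) (use assms in simp)
  then show ?thesis using distr_p by simp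
qed

lemma tr_integrable: fixes h :: "(nat \<Rightarrow> real^'n) \<Rightarrow> real" assumes "h \<in> borel_measurable (PiM {..<T} \<mu>)"
  shows "integrable (PiM {..<T} \<mu>) h \<longleftrightarrow> integrable M (\<lambda>\<omega>. h (p \<omega>))"
  using integrable_distr_eq[OF p_meas assms] distr_p by simp

interpretation PP: product_prob_space \<mu> "{}"
  unfolding product_prob_space_def product_prob_space_axioms_def
  using PS.product_sigma_finite_axioms prob_mu by blast

lemma D_restr: "PiM {..<t} \<mu> = distr (PiM {..<T} \<mu>) (PiM {..<t} \<mu>) (\<lambda>f. restrict f {..<t})"
  by (rule PP.distr_restrict) (use t_le in auto)

lemma rs_int: fixes H :: "(nat \<Rightarrow> real^'n) \<Rightarrow> real" assumes "H \<in> borel_measurable (PiM {..<t} \<mu>)"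
  shows "integral\<^sup>L (PiM {..<t} \<mu>) H = integral\<^sup>L (PiM {..<T} \<mu>) (\<lambda>b. H (restrict b {..<t}))"
proof -
  have mr: "(\<lambda>f. restrict f {..<t}) \<in> measurable (PiM {..<T} \<mu>) (PiM {..<t} \<mu>)"
    by (rule measurable_restrict_subset) (use t_le in auto)
  show ?thesis by (subst D_restr) (rule integral_distr[OF mr assms])
qed

lemma rs_nn: fixes H :: "(nat \<Rightarrow> real^'n) \<Rightarrow> real" assumes "H \<in> borel_measurable (PiM {..<t} \<mu>)"
  shows "(\<integral>\<^sup>+x. ennreal (H x) \<partial>PiM {..<t} \<mu>) = (\<integral>\<^sup>+b. ennreal (H (restrict b {..<t})) \<partial>PiM {..<T} \<mu>)"
proof -
  have mr: "(\<lambda>f. restrict f {..<t}) \<in> measurable (PiM {..<T} \<mu>) (PiM {..<t} \<mu>)"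
    by (rule measurable_restrict_subset) (use t_le in auto)
  show ?thesis by (subst D_restr, rule nn_integral_distr[OF mr]) (use assms in simp)
qed


lemma Gt_restr: "Gt b = Gt (restrict b {..<t})"
  unfolding Gt_def using Xg_cong[of t b "restrict b {..<t}"] by simp

lemma Gt_merge: "Gt (merge {..<t} {t..<T} (x, z)) = Gt x"
  unfolding Gt_def using Xg_cong[of t "merge {..<t} {t..<T} (x, z)" x] by (simp add: merge_def)

lemma fin_merge: "fin t y (merge {..<t} {t..<T} (x, z)) = fin t y z"
  by (rule fin_cong) (simp add: merge_def)

lemma FQ_meas: "(\<lambda>b. fin t (Gt b) b) \<in> borel_measurable (PiM {..<T} \<mu>)"
  using fin_meas[where f=Gt and N="PiM {..<T} \<mu>" and k=t and c="\<lambda>x. x"] Gt_meas coord_meas by simp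

lemma YT_rep: "\<omega> \<in> space M \<Longrightarrow> Y T \<omega> = fin t (Gt (p \<omega>)) (p \<omega>)"
  using YT_fin[of t \<omega>] Yt_rep[of \<omega>] t_le by simp

lemma YT_meas: "Y T \<in> borel_measurable M"
proof -
  have "(\<lambda>\<omega>. fin t (Gt (p \<omega>)) (p \<omega>)) \<in> borel_measurable M"
    by (rule measurable_compose[OF p_meas FQ_meas])
  then show ?thesis by (rule measurable_cong[THEN iffD1, rotated]) (simp add: YT_rep)
qed

lemma key_t: "integrable (PiM {t..<T} \<mu>) (\<lambda>b. (fin t y b)\<^sup>2) \<and> integral\<^sup>L (PiM {t..<T} \<mu>) (fin t y) = \<phi>1 t y
         \<and> integral\<^sup>L (PiM {t..<T} \<mu>) (\<lambda>b. (fin t y b)\<^sup>2) = \<phi>2 t y"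
  by (rule key[OF t_le])

lemma phi2_nn: "0 \<le> \<phi>2 t w"
proof -
  have "0 \<le> integral\<^sup>L (PiM {t..<T} \<mu>) (\<lambda>b. (fin t w b)\<^sup>2)"
    by (rule Bochner_Integration.integral_nonneg) simp
  then show ?thesis using key_t[of w] by simp
qed

lemma phi1b: "(\<lambda>w. \<phi>1 k w) \<in> borel_measurable borel" unfolding \<phi>1_def by measurable
lemma phi2b: "(\<lambda>w. \<phi>2 k w) \<in> borel_measurable borel" unfolding \<phi>2_def by measurable

lemma Yt2_int: "integrable M (\<lambda>\<omega>. (Y t \<omega>)\<^sup>2)"
proof -
  have i2: "integrable M (\<lambda>\<omega>. (X t \<omega>)\<^sup>2)" by (rule X2_int) simp
  have i1: "integrable M (X t)" by (rule square_integrable_imp_integrable[OF X_meas i2]) simp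
  have "integrable M (\<lambda>\<omega>. (X t \<omega>)\<^sup>2 - 2 * (W / \<rho> t) * X t \<omega> + (W / \<rho> t)\<^sup>2)"
    using i1 i2 by simp
  then show ?thesis by (simp add: Y_def power2_eq_square algebra_simps)
qed

lemma Yt_int: "integrable M (Y t)"
  by (rule square_integrable_imp_integrable[OF Yt_meas Yt2_int])

lemma int_phi1: "integrable M (\<lambda>\<omega>. \<phi>1 t (Y t \<omega>))"
proof -
  have [measurable]: "Y t \<in> borel_measurable M" by (rule Yt_meas)
  have a: "integrable M (\<lambda>\<omega>. (if 0 \<le> Y t \<omega> then 1 else 0) * (ap t * Y t \<omega>))"
    by (rule int_ind_gen) (use Yt_int in auto)
  have b: "integrable M (\<lambda>\<omega>. (if Y t \<omega> < 0 then 1 else 0) * (am t * Y t \<omega>))"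
    by (rule int_ind_gen) (use Yt_int in auto)
  have "integrable M (\<lambda>\<omega>. \<rho> t * Y t \<omega> + (if 0 \<le> Y t \<omega> then 1 else 0) * (ap t * Y t \<omega>)
      + (if Y t \<omega> < 0 then 1 else 0) * (am t * Y t \<omega>))"
    using a b Yt_int by simp
  then show ?thesis by (simp add: \<phi>1_def mult_ac)
qed

lemma int_phi2: "integrable M (\<lambda>\<omega>. \<phi>2 t (Y t \<omega>))"
proof -
  have [measurable]: "Y t \<in> borel_measurable M" by (rule Yt_meas)
  have a: "integrable M (\<lambda>\<omega>. (if 0 \<le> Y t \<omega> then 1 else 0) * ((2 * \<rho> t * ap t + bp t) * (Y t \<omega>)\<^sup>2))"
    by (rule int_ind_gen) (use Yt2_int in auto)
  have b: "integrable M (\<lambda>\<omega>. (if Y t \<omega> < 0 then 1 else 0) * ((2 * \<rho> t * am t + bm t) * (Y t \<omega>)\<^sup>2))"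
    by (rule int_ind_gen) (use Yt2_int in auto)
  have "integrable M (\<lambda>\<omega>. (\<rho> t)\<^sup>2 * (Y t \<omega>)\<^sup>2 + (if 0 \<le> Y t \<omega> then 1 else 0) * ((2 * \<rho> t * ap t + bp t) * (Y t \<omega>)\<^sup>2)
      + (if Y t \<omega> < 0 then 1 else 0) * ((2 * \<rho> t * am t + bm t) * (Y t \<omega>)\<^sup>2))"
    using a b Yt2_int by simp
  then show ?thesis by (simp add: \<phi>2_def mult_ac)
qed

lemma sets_split: "{..<T} = {..<t} \<union> {t..<T}" "{..<t} \<inter> {t..<T} = {}"
  using t_le by auto

lemma nnQ: "(\<integral>\<^sup>+b. ennreal ((fin t (Gt b) b)\<^sup>2) \<partial>PiM {..<T} \<mu>) = ennreal (integral\<^sup>L M (\<lambda>\<omega>. \<phi>2 t (Y t \<omega>)))"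
proof -
  interpret N2: prob_space "PiM {t..<T} \<mu>" by (rule prob_PiM)
  have m: "(\<lambda>b. ennreal ((fin t (Gt b) b)\<^sup>2)) \<in> borel_measurable (PiM ({..<t} \<union> {t..<T}) \<mu>)"
    using FQ_meas sets_split(1) by simp
  have H: "(\<lambda>x. \<phi>2 t (Gt x)) \<in> borel_measurable (PiM {..<t} \<mu>)"
    using measurable_compose[OF Gt_meas_gen[of "{..<t}"] phi2b] by simp
  have "(\<integral>\<^sup>+b. ennreal ((fin t (Gt b) b)\<^sup>2) \<partial>PiM {..<T} \<mu>)
      = (\<integral>\<^sup>+b. ennreal ((fin t (Gt b) b)\<^sup>2) \<partial>PiM ({..<t} \<union> {t..<T}) \<mu>)"
    using sets_split(1) by simp
  also have "\<dots> = (\<integral>\<^sup>+x. (\<integral>\<^sup>+z. ennreal ((fin t (Gt (merge {..<t} {t..<T} (x, z))) (merge {..<t} {t..<T} (x, z)))\<^sup>2)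
       \<partial>PiM {t..<T} \<mu>) \<partial>PiM {..<t} \<mu>)"
    by (rule PS.product_nn_integral_fold) (use sets_split m in auto)
  also have "\<dots> = (\<integral>\<^sup>+x. ennreal (\<phi>2 t (Gt x)) \<partial>PiM {..<t} \<mu>)"
    unfolding Gt_merge fin_merge using key_t by (intro nn_integral_cong) (simp add: nn_integral_eq_integral)
  also have "\<dots> = (\<integral>\<^sup>+b. ennreal (\<phi>2 t (Gt (restrict b {..<t}))) \<partial>PiM {..<T} \<mu>)"
    by (rule rs_nn[OF H])
  also have "\<dots> = (\<integral>\<^sup>+b. ennreal (\<phi>2 t (Gt b)) \<partial>PiM {..<T} \<mu>)"
    using Gt_restr by simp
  also have "\<dots> = (\<integral>\<^sup>+\<omega>. ennreal (\<phi>2 t (Gt (p \<omega>))) \<partial>M)"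
    by (rule tr_nn) (rule measurable_compose[OF Gt_meas phi2b])
  also have "\<dots> = (\<integral>\<^sup>+\<omega>. ennreal (\<phi>2 t (Y t \<omega>)) \<partial>M)"
    by (rule nn_integral_cong) (simp add: Yt_rep)
  also have "\<dots> = ennreal (integral\<^sup>L M (\<lambda>\<omega>. \<phi>2 t (Y t \<omega>)))"
    by (rule nn_integral_eq_integral) (use int_phi2 phi2_nn in auto)
  finally show ?thesis .
qed

lemma intQ2: "integrable (PiM {..<T} \<mu>) (\<lambda>b. (fin t (Gt b) b)\<^sup>2)"
  unfolding integrable_iff_bounded using FQ_meas nnQ by simp

lemma intQ1: "integrable (PiM {..<T} \<mu>) (\<lambda>b. fin t (Gt b) b)"
proof -
  interpret Q: prob_space "PiM {..<T} \<mu>" by (rule prob_PiM)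
  show ?thesis by (rule Q.square_integrable_imp_integrable[OF FQ_meas intQ2])
qed

lemma YT_int: "integrable M (Y T)" "integrable M (\<lambda>\<omega>. (Y T \<omega>)\<^sup>2)"
proof -
  have "integrable M (\<lambda>\<omega>. fin t (Gt (p \<omega>)) (p \<omega>))"
    using intQ1 tr_integrable[OF FQ_meas] by simp
  then show "integrable M (Y T)"
    by (rule Bochner_Integration.integrable_cong[THEN iffD1, rotated 2]) (simp_all add: YT_rep)
  have "integrable M (\<lambda>\<omega>. (fin t (Gt (p \<omega>)) (p \<omega>))\<^sup>2)"
    using intQ2 tr_integrable[of "\<lambda>b. (fin t (Gt b) b)\<^sup>2"] FQ_meas by simp
  then show "integrable M (\<lambda>\<omega>. (Y T \<omega>)\<^sup>2)"
    by (rule Bochner_Integration.integrable_cong[THEN iffD1, rotated 2]) (simp_all add: YT_rep)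
qed

lemma charact_gen:
  fixes F \<psi> :: "real \<Rightarrow> real"
  assumes Fm: "F \<in> borel_measurable borel" and \<psi>m: "\<psi> \<in> borel_measurable borel"
    and iF: "integrable (PiM {..<T} \<mu>) (\<lambda>b. F (fin t (Gt b) b))"
    and inner: "\<And>y. integral\<^sup>L (PiM {t..<T} \<mu>) (\<lambda>z. F (fin t y z)) = \<psi> y"
    and B: "B \<in> sets borel"
  shows "integral\<^sup>L M (\<lambda>\<omega>. indicator B (Y t \<omega>) * F (Y T \<omega>)) = integral\<^sup>L M (\<lambda>\<omega>. indicator B (Y t \<omega>) * \<psi> (Y t \<omega>))"
proof -
  define R where "R = (\<lambda>b. indicator B (Gt b) * F (fin t (Gt b) b))"
  have [measurable]: "Gt \<in> borel_measurable (PiM {..<T} \<mu>)" by (rule Gt_meas)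
  have [measurable]: "(\<lambda>b. fin t (Gt b) b) \<in> borel_measurable (PiM {..<T} \<mu>)" by (rule FQ_meas)
  have [measurable]: "F \<in> borel_measurable borel" "\<psi> \<in> borel_measurable borel" "B \<in> sets borel" by fact+
  have Rm: "R \<in> borel_measurable (PiM {..<T} \<mu>)" unfolding R_def by measurable
  have iR: "integrable (PiM {..<T} \<mu>) R"
  proof -
    have "(\<lambda>b. indicator B (Gt b) :: real) \<in> borel_measurable (PiM {..<T} \<mu>)"
      using measurable_compose[OF Gt_meas borel_measurable_indicator[OF B]] by simp
    then show ?thesis unfolding R_def by (rule int_ind_gen[OF iF]) (simp add: indicator_def)
  qed
  have iR': "integrable (PiM ({..<t} \<union> {t..<T}) \<mu>) R" using iR sets_split(1) by simp
  have H: "(\<lambda>x. indicator B (Gt x) * \<psi> (Gt x)) \<in> borel_measurable (PiM {..<t} \<mu>)"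
  proof -
    have [measurable]: "Gt \<in> borel_measurable (PiM {..<t} \<mu>)" by (rule Gt_meas_gen) simp
    show ?thesis by measurable
  qed
  have "integral\<^sup>L M (\<lambda>\<omega>. indicator B (Y t \<omega>) * F (Y T \<omega>)) = integral\<^sup>L M (\<lambda>\<omega>. R (p \<omega>))"
    by (rule Bochner_Integration.integral_cong) (simp_all add: R_def Yt_rep YT_rep)
  also have "\<dots> = integral\<^sup>L (PiM {..<T} \<mu>) R" by (rule tr_int[OF Rm, symmetric])
  also have "\<dots> = integral\<^sup>L (PiM ({..<t} \<union> {t..<T}) \<mu>) R" using sets_split(1) by simp
  also have "\<dots> = (\<integral>x. (\<integral>z. R (merge {..<t} {t..<T} (x, z)) \<partial>PiM {t..<T} \<mu>) \<partial>PiM {..<t} \<mu>)"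
    by (rule PS.product_integral_fold) (use sets_split iR' in auto)
  also have "\<dots> = (\<integral>x. indicator B (Gt x) * \<psi> (Gt x) \<partial>PiM {..<t} \<mu>)"
    unfolding R_def Gt_merge fin_merge by (simp add: inner)
  also have "\<dots> = (\<integral>b. indicator B (Gt (restrict b {..<t})) * \<psi> (Gt (restrict b {..<t})) \<partial>PiM {..<T} \<mu>)"
    by (rule rs_int[OF H])
  also have "\<dots> = (\<integral>b. indicator B (Gt b) * \<psi> (Gt b) \<partial>PiM {..<T} \<mu>)"
    using Gt_restr by simp
  also have "\<dots> = integral\<^sup>L M (\<lambda>\<omega>. indicator B (Gt (p \<omega>)) * \<psi> (Gt (p \<omega>)))"
    by (rule tr_int) measurable
  also have "\<dots> = integral\<^sup>L M (\<lambda>\<omega>. indicator B (Y t \<omega>) * \<psi> (Y t \<omega>))"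
    by (rule Bochner_Integration.integral_cong) (simp_all add: Yt_rep)
  finally show ?thesis .
qed


definition FF where "FF = vimage_algebra (space M) (Y t) borel"

lemma subalg: "subalgebra M FF"
  using measurable_iff_sets[THEN iffD1, OF Yt_meas] unfolding subalgebra_def FF_def by simp

interpretation S: finite_measure_subalgebra M FF
  unfolding finite_measure_subalgebra_def finite_measure_subalgebra_axioms_def
  using subalg finite_measure_axioms by blast

lemma Yt_FF: "Y t \<in> borel_measurable FF"
  unfolding FF_def by (rule measurable_vimage_algebra1) simp

lemma set_int_FF:
  fixes F \<psi> :: "real \<Rightarrow> real"
  assumes A: "A \<in> sets FF" and Fm: "F \<in> borel_measurable borel" and \<psi>m: "\<psi> \<in> borel_measurable borel"
    and iF: "integrable (PiM {..<T} \<mu>) (\<lambda>b. F (fin t (Gt b) b))"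
    and inner: "\<And>y. integral\<^sup>L (PiM {t..<T} \<mu>) (\<lambda>z. F (fin t y z)) = \<psi> y"
  shows "(\<integral>x\<in>A. F (Y T x) \<partial>M) = (\<integral>x\<in>A. \<psi> (Y t x) \<partial>M)"
proof -
  have "sets FF = {Y t -` B \<inter> space M | B. B \<in> sets borel}"
    unfolding FF_def by (rule sets_vimage_algebra2) simp
  with A obtain B where B: "B \<in> sets borel" "A = Y t -` B \<inter> space M" by blast
  have ind: "indicator A \<omega> = (indicator B (Y t \<omega>) :: real)" if "\<omega> \<in> space M" for \<omega>
    using that B(2) by (simp add: indicator_def)
  have "(\<integral>x\<in>A. F (Y T x) \<partial>M) = integral\<^sup>L M (\<lambda>\<omega>. indicator B (Y t \<omega>) * F (Y T \<omega>))"
    unfolding set_lebesgue_integral_def by (rule Bochner_Integration.integral_cong) (simp_all add: ind)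
  also have "\<dots> = integral\<^sup>L M (\<lambda>\<omega>. indicator B (Y t \<omega>) * \<psi> (Y t \<omega>))"
    by (rule charact_gen[OF Fm \<psi>m iF inner B(1)])
  also have "\<dots> = (\<integral>x\<in>A. \<psi> (Y t x) \<partial>M)"
    unfolding set_lebesgue_integral_def by (rule Bochner_Integration.integral_cong) (simp_all add: ind)
  finally show ?thesis .
qed

lemma thm1: "AE \<omega> in M. real_cond_exp M FF (Y T) \<omega> = \<phi>1 t (Y t \<omega>)"
proof (rule S.real_cond_exp_charact)
  fix A assume A: "A \<in> sets FF"
  show "(\<integral>x\<in>A. Y T x \<partial>M) = (\<integral>x\<in>A. \<phi>1 t (Y t x) \<partial>M)"
    using set_int_FF[OF A, where F="\<lambda>x. x" and \<psi>="\<phi>1 t"] phi1b intQ1 key_t by simp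
next
  show "integrable M (Y T)" by (rule YT_int(1))
  show "integrable M (\<lambda>x. \<phi>1 t (Y t x))" by (rule int_phi1)
  show "(\<lambda>x. \<phi>1 t (Y t x)) \<in> borel_measurable FF"
    by (rule measurable_compose[OF Yt_FF phi1b])
qed

lemma thm2: "AE \<omega> in M. real_cond_exp M FF (\<lambda>x. (Y T x)\<^sup>2) \<omega> = \<phi>2 t (Y t \<omega>)"
proof (rule S.real_cond_exp_charact)
  fix A assume A: "A \<in> sets FF"
  have m: "(\<lambda>x::real. x\<^sup>2) \<in> borel_measurable borel" by measurable
  show "(\<integral>x\<in>A. (Y T x)\<^sup>2 \<partial>M) = (\<integral>x\<in>A. \<phi>2 t (Y t x) \<partial>M)"
    using set_int_FF[OF A m phi2b intQ2] key_t by simp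
next
  show "integrable M (\<lambda>x. (Y T x)\<^sup>2)" by (rule YT_int(2))
  show "integrable M (\<lambda>x. \<phi>2 t (Y t x))" by (rule int_phi2)
  show "(\<lambda>x. \<phi>2 t (Y t x)) \<in> borel_measurable FF"
    by (rule measurable_compose[OF Yt_FF phi2b])
qed

lemma FF_X: "vimage_algebra (space M) (X t) borel = FF"
proof -
  have "X t = (\<lambda>\<omega>. Y t \<omega> + W / \<rho> t)" by (simp add: Y_def fun_eq_iff)
  then show ?thesis unfolding FF_def by (simp add: vimage_shift)
qed

lemma thm3: "AE \<omega> in M. cond_var M (vimage_algebra (space M) (X t) borel) (X T) \<omega>
           = ((bp t - (ap t)\<^sup>2) * (if Y t \<omega> \<ge> 0 then 1 else 0)
              + (bm t - (am t)\<^sup>2) * (if Y t \<omega> < 0 then 1 else 0)) * (Y t \<omega>)\<^sup>2"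
proof -
  have rT: "\<rho> T = 1" by (simp add: rho_def)
  have XT: "X T = (\<lambda>\<omega>. Y T \<omega> + W)" by (simp add: Y_def rT fun_eq_iff)
  have XT2: "(\<lambda>x. (X T x)\<^sup>2) = (\<lambda>x. (Y T x)\<^sup>2 + ((2 * W) * Y T x + W\<^sup>2))"
    by (simp add: XT fun_eq_iff power2_eq_square algebra_simps)
  have cW: "(\<lambda>_. c) \<in> borel_measurable FF" for c :: real by simp
  have a1: "AE \<omega> in M. real_cond_exp M FF (X T) \<omega> = real_cond_exp M FF (Y T) \<omega> + real_cond_exp M FF (\<lambda>_. W) \<omega>"
    unfolding XT by (rule S.real_cond_exp_add) (simp_all add: YT_int)
  have a2: "AE \<omega> in M. real_cond_exp M FF (\<lambda>_. W) \<omega> = W"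
    by (rule S.real_cond_exp_F_meas) simp_all
  have a3: "AE \<omega> in M. real_cond_exp M FF (\<lambda>x. (X T x)\<^sup>2) \<omega> = real_cond_exp M FF (\<lambda>x. (Y T x)\<^sup>2) \<omega>
      + real_cond_exp M FF (\<lambda>x. (2 * W) * Y T x + W\<^sup>2) \<omega>"
    unfolding XT2 by (rule S.real_cond_exp_add) (simp_all add: YT_int)
  have a4: "AE \<omega> in M. real_cond_exp M FF (\<lambda>x. (2 * W) * Y T x + W\<^sup>2) \<omega>
      = real_cond_exp M FF (\<lambda>x. (2 * W) * Y T x) \<omega> + real_cond_exp M FF (\<lambda>_. W\<^sup>2) \<omega>"
    by (rule S.real_cond_exp_add) (simp_all add: YT_int)
  have a5: "AE \<omega> in M. real_cond_exp M FF (\<lambda>x. (2 * W) * Y T x) \<omega> = (2 * W) * real_cond_exp M FF (Y T) \<omega>"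
    by (rule S.real_cond_exp_cmult) (simp add: YT_int)
  have a6: "AE \<omega> in M. real_cond_exp M FF (\<lambda>_. W\<^sup>2) \<omega> = W\<^sup>2"
    by (rule S.real_cond_exp_F_meas) simp_all
  show ?thesis
    using a1 a2 a3 a4 a5 a6 thm1 thm2
  proof eventually_elim
    case (elim \<omega>)
    have "cond_var M (vimage_algebra (space M) (X t) borel) (X T) \<omega> = \<phi>2 t (Y t \<omega>) - (\<phi>1 t (Y t \<omega>))\<^sup>2"
      unfolding FF_X cond_var_def using elim by (simp add: power2_eq_square algebra_simps)
    also have "\<dots> = ((bp t - (ap t)\<^sup>2) * (if Y t \<omega> \<ge> 0 then 1 else 0)
              + (bm t - (am t)\<^sup>2) * (if Y t \<omega> < 0 then 1 else 0)) * (Y t \<omega>)\<^sup>2"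
      by (cases "0 \<le> Y t \<omega>") (simp_all add: \<phi>1_def \<phi>2_def power2_eq_square algebra_simps)
    finally show ?case .
  qed
qed

end

theorem mainTheorem3:
  fixes M :: "'a measure"
    and T :: nat
    and s :: "nat \<Rightarrow> real"
    and P :: "nat \<Rightarrow> 'a \<Rightarrow> real^'n"
    and \<rho> :: "nat \<Rightarrow> real"
    and gp gm :: "nat \<Rightarrow> real"
    and Kp Km :: "nat \<Rightarrow> real^'n"
    and ap am bp bm :: "nat \<Rightarrow> real"
    and x0 W :: real
    and X :: "nat \<Rightarrow> 'a \<Rightarrow> real"
    and Y :: "nat \<Rightarrow> 'a \<Rightarrow> real"
    and u :: "nat \<Rightarrow> 'a \<Rightarrow> real^'n"
    and t :: nat
  assumes M: "prob_space M"
    and s_gt1: "\<And>j. j < T \<Longrightarrow> s j > 1"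
    and P_meas: "\<And>j. j < T \<Longrightarrow> P j \<in> borel_measurable M"
    and P_indep: "prob_space.indep_vars M (\<lambda>_. borel) P {..<T}"
    and P_ac: "\<And>j. j < T \<Longrightarrow> absolutely_continuous lborel (distr M borel (P j))"
    and P_int1: "\<And>j. j < T \<Longrightarrow> integrable M (P j)"
    and P_int2: "\<And>j. j < T \<Longrightarrow> integrable M (\<lambda>\<omega>. (norm (P j \<omega>))\<^sup>2)"
    and P_cov_pd: "\<And>j L. j < T \<Longrightarrow> L \<noteq> 0 \<Longrightarrow> L \<bullet> (cov_mat M (P j) *v L) > 0"
    and no_arb: "\<And>j L. j < T \<Longrightarrow> L \<noteq> 0 \<Longrightarrow>
        \<not> (AE \<omega> in M. P j \<omega> \<bullet> L \<le> 0) \<and> \<not> (AE \<omega> in M. P j \<omega> \<bullet> L \<ge> 0)"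
    and rho_def: "\<And>j. \<rho> j = (\<Prod>i\<in>{j..<T}. s i)"
    and gp_nn: "\<And>j. gp j \<ge> 0"
    and gm_nn: "\<And>j. gm j \<ge> 0"
    and aT: "ap T = 0" "am T = 0"
    and bT: "bp T = 0" "bm T = 0"
    and Kp_min: "\<And>j L. j < T \<Longrightarrow>
        F_plus M (P j) (s j) (\<rho> (Suc j)) (ap (Suc j)) (am (Suc j)) (bp (Suc j)) (bm (Suc j)) (gp j) (Kp j)
        \<le> F_plus M (P j) (s j) (\<rho> (Suc j)) (ap (Suc j)) (am (Suc j)) (bp (Suc j)) (bm (Suc j)) (gp j) L"
    and Km_min: "\<And>j L. j < T \<Longrightarrow>
        F_minus M (P j) (s j) (\<rho> (Suc j)) (ap (Suc j)) (am (Suc j)) (bp (Suc j)) (bm (Suc j)) (gm j) (Km j)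
        \<le> F_minus M (P j) (s j) (\<rho> (Suc j)) (ap (Suc j)) (am (Suc j)) (bp (Suc j)) (bm (Suc j)) (gm j) L"
    and ap_rec: "\<And>j. j < T \<Longrightarrow> ap j =
        \<rho> (Suc j) * (mean_vec M (P j) \<bullet> Kp j)
        + integral\<^sup>L M (\<lambda>\<omega>. ap (Suc j) * (s j + P j \<omega> \<bullet> Kp j)
              * (if s j + P j \<omega> \<bullet> Kp j \<ge> 0 then 1 else 0))
        + integral\<^sup>L M (\<lambda>\<omega>. am (Suc j) * (s j + P j \<omega> \<bullet> Kp j)
              * (if s j + P j \<omega> \<bullet> Kp j < 0 then 1 else 0))"
    and am_rec: "\<And>j. j < T \<Longrightarrow> am j =
        \<rho> (Suc j) * (mean_vec M (P j) \<bullet> Km j)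
        + integral\<^sup>L M (\<lambda>\<omega>. ap (Suc j) * (s j + P j \<omega> \<bullet> Km j)
              * (if s j + P j \<omega> \<bullet> Km j \<le> 0 then 1 else 0))
        + integral\<^sup>L M (\<lambda>\<omega>. am (Suc j) * (s j + P j \<omega> \<bullet> Km j)
              * (if s j + P j \<omega> \<bullet> Km j > 0 then 1 else 0))"
    and bp_rec: "\<And>j. j < T \<Longrightarrow> bp j =
        (\<rho> (Suc j))\<^sup>2 * (Kp j \<bullet> (smom_mat M (P j) *v Kp j))
        + 2 * \<rho> (Suc j) * integral\<^sup>L M (\<lambda>\<omega>. ap (Suc j) * (s j + P j \<omega> \<bullet> Kp j) * (P j \<omega> \<bullet> Kp j)
              * (if s j + P j \<omega> \<bullet> Kp j \<ge> 0 then 1 else 0))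
        + 2 * \<rho> (Suc j) * integral\<^sup>L M (\<lambda>\<omega>. am (Suc j) * (s j + P j \<omega> \<bullet> Kp j) * (P j \<omega> \<bullet> Kp j)
              * (if s j + P j \<omega> \<bullet> Kp j < 0 then 1 else 0))
        + integral\<^sup>L M (\<lambda>\<omega>. bp (Suc j) * (s j + P j \<omega> \<bullet> Kp j)\<^sup>2
              * (if s j + P j \<omega> \<bullet> Kp j \<ge> 0 then 1 else 0))
        + integral\<^sup>L M (\<lambda>\<omega>. bm (Suc j) * (s j + P j \<omega> \<bullet> Kp j)\<^sup>2
              * (if s j + P j \<omega> \<bullet> Kp j < 0 then 1 else 0))"
    and bm_rec: "\<And>j. j < T \<Longrightarrow> bm j =
        (\<rho> (Suc j))\<^sup>2 * (Km j \<bullet> (smom_mat M (P j) *v Km j))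
        + 2 * \<rho> (Suc j) * integral\<^sup>L M (\<lambda>\<omega>. ap (Suc j) * (s j + P j \<omega> \<bullet> Km j) * (P j \<omega> \<bullet> Km j)
              * (if s j + P j \<omega> \<bullet> Km j \<le> 0 then 1 else 0))
        + 2 * \<rho> (Suc j) * integral\<^sup>L M (\<lambda>\<omega>. am (Suc j) * (s j + P j \<omega> \<bullet> Km j) * (P j \<omega> \<bullet> Km j)
              * (if s j + P j \<omega> \<bullet> Km j > 0 then 1 else 0))
        + integral\<^sup>L M (\<lambda>\<omega>. bp (Suc j) * (s j + P j \<omega> \<bullet> Km j)\<^sup>2
              * (if s j + P j \<omega> \<bullet> Km j \<le> 0 then 1 else 0))
        + integral\<^sup>L M (\<lambda>\<omega>. bm (Suc j) * (s j + P j \<omega> \<bullet> Km j)\<^sup>2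
              * (if s j + P j \<omega> \<bullet> Km j > 0 then 1 else 0))"
    and X0: "\<And>\<omega>. \<omega> \<in> space M \<Longrightarrow> X 0 \<omega> = x0"
    and X_step: "\<And>j \<omega>. j < T \<Longrightarrow> \<omega> \<in> space M \<Longrightarrow>
        X (Suc j) \<omega> = s j * X j \<omega> + P j \<omega> \<bullet> u j \<omega>"
    and Y_def: "\<And>j \<omega>. Y j \<omega> = X j \<omega> - W / \<rho> j"
    and u_early_adapted: "\<And>j. j < t \<Longrightarrow> \<exists>g \<in> borel_measurable (PiM {..<j} (\<lambda>_. borel)).
        \<forall>\<omega> \<in> space M. u j \<omega> = g (\<lambda>i \<in> {..<j}. P i \<omega>)"
    and u_early_L2: "\<And>j. j < t \<Longrightarrow> integrable M (\<lambda>\<omega>. (norm (u j \<omega>))\<^sup>2)"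
    and u_policy: "\<And>j \<omega>. t \<le> j \<Longrightarrow> j < T \<Longrightarrow> \<omega> \<in> space M \<Longrightarrow>
        u j \<omega> = (Y j \<omega> * (if Y j \<omega> \<ge> 0 then 1 else 0)) *\<^sub>R Kp j
               + (Y j \<omega> * (if Y j \<omega> < 0 then 1 else 0)) *\<^sub>R Km j"
    and t_le: "t \<le> T"
  shows "(AE \<omega> in M. real_cond_exp M (vimage_algebra (space M) (Y t) borel) (Y T) \<omega>
           = \<rho> t * Y t \<omega> + ap t * Y t \<omega> * (if Y t \<omega> \<ge> 0 then 1 else 0)
             + am t * Y t \<omega> * (if Y t \<omega> < 0 then 1 else 0))
    \<and> (AE \<omega> in M. real_cond_exp M (vimage_algebra (space M) (Y t) borel) (\<lambda>x. (Y T x)\<^sup>2) \<omega>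
           = (\<rho> t)\<^sup>2 * (Y t \<omega>)\<^sup>2
             + (2 * \<rho> t * ap t + bp t) * (Y t \<omega>)\<^sup>2 * (if Y t \<omega> \<ge> 0 then 1 else 0)
             + (2 * \<rho> t * am t + bm t) * (Y t \<omega>)\<^sup>2 * (if Y t \<omega> < 0 then 1 else 0))
    \<and> (AE \<omega> in M. cond_var M (vimage_algebra (space M) (X t) borel) (X T) \<omega>
           = ((bp t - (ap t)\<^sup>2) * (if Y t \<omega> \<ge> 0 then 1 else 0)
              + (bm t - (am t)\<^sup>2) * (if Y t \<omega> < 0 then 1 else 0)) * (Y t \<omega>)\<^sup>2)"
  proof -
  interpret I: mv3 M T s P \<rho> Kp Km ap am bp bm x0 W X Y u t
    by (intro mv3.intro mv2.intro mv.intro mv2_axioms.intro mv3_axioms.intro) (fact assms)+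
  show ?thesis
    using I.thm1 I.thm2 I.thm3 unfolding I.FF_def I.\<phi>1_def I.\<phi>2_def by blast
qed

end
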